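(* For $0<d_m\le\frac1{SA}$, let $\mathcal M_{d_m}:=\{(\mu,M):\min_{t,s_t,a_t}d^\mu_t(s_t,a_t)\ge d_m\}$, where $M$ ranges over finite-horizon tabular MDPs with stationary transitions, $S$ states, $A$ actions and horizon $H$, and $\mu$ over behavior policies. There exist universal constants $c_1,c_2,c,p>0$ such that, whenever $H,S,A\ge c_1$ and $0<\epsilon<c_2$, if $n\le cH^2/(d_m\epsilon^2)$ then \[ \inf_{\mathrm{alg}}\ \sup_{(\mu,M)\in\mathcal M_{d_m}}\mathbb P_{\mu,M}\big(v^\star-v^{\pi_{\mathrm{alg}}}\ge\epsilon\big)\ge p, \] where the infimum is over all algorithms that output a policy $\pi_{\mathrm{alg}}$ from $n$ episodes of offline data generated by $\mu$ on $M$.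
   Context: A finite-horizon MDP has finite state/action sets, horizon $H$, rewards in $[0,1]$, a transition kernel $P$ identical at all steps (stationary), and initial distribution $d_1$. Offline data: $n$ i.i.d. episodes obtained by running the behavior policy $\mu$ in $M$. $d^\mu_t(s,a)=\mathbb P^\mu(s_t=s,a_t=a)$. For a policy $\pi$, $v^\pi=\mathbb E^\pi[\sum_{t=1}^Hr_t]$ (with $s_1\sim d_1$) and $v^\star=\sup_\pi v^\pi$. $\mathbb P_{\mu,M}$ denotes probability over the data and the algorithm. *)

theory Defs
  imports "HOL-Probability.Probability"
begin

text \<open>States are naturals below S, actions naturals below A, time steps 1..H.\<close>

record mdp =
  init :: "nat pmf"
  trans :: "nat \<Rightarrow> nat \<Rightarrow> nat pmf"
  rew :: "nat \<Rightarrow> nat \<Rightarrow> nat \<Rightarrow> real"         (* reward r_t(s,a) *)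

type_synonym policy = "nat \<Rightarrow> nat \<Rightarrow> nat pmf"   (* pi_t(. | s) *)
type_synonym episode = "(nat \<times> nat \<times> real) list"  (* (s_t, a_t, r_t), t = 1..H *)

definition valid_mdp :: "nat \<Rightarrow> nat \<Rightarrow> nat \<Rightarrow> mdp \<Rightarrow> bool" where
  "valid_mdp S A H M \<longleftrightarrow>
     set_pmf (init M) \<subseteq> {..<S} \<and>
     (\<forall>s<S. \<forall>a<A. set_pmf (trans M s a) \<subseteq> {..<S}) \<and>
     (\<forall>t\<in>{1..H}. \<forall>s<S. \<forall>a<A. 0 \<le> rew M t s a \<and> rew M t s a \<le> 1)"

definition valid_policy :: "nat \<Rightarrow> nat \<Rightarrow> nat \<Rightarrow> policy \<Rightarrow> bool" where
  "valid_policy S A H \<pi> \<longleftrightarrow> (\<forall>t\<in>{1..H}. \<forall>s<S. set_pmf (\<pi> t s) \<subseteq> {..<A})"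

fun traj :: "mdp \<Rightarrow> policy \<Rightarrow> nat \<Rightarrow> nat \<Rightarrow> nat \<Rightarrow> episode pmf" where
  "traj M \<pi> t s 0 = return_pmf []"
| "traj M \<pi> t s (Suc k) =
     bind_pmf (\<pi> t s) (\<lambda>a. bind_pmf (trans M s a) (\<lambda>s'.
       map_pmf (\<lambda>rest. (s, a, rew M t s a) # rest) (traj M \<pi> (Suc t) s' k)))"

definition episode_pmf :: "mdp \<Rightarrow> policy \<Rightarrow> nat \<Rightarrow> episode pmf" where
  "episode_pmf M \<pi> H = bind_pmf (init M) (\<lambda>s. traj M \<pi> 1 s H)"

definition pol_value :: "mdp \<Rightarrow> nat \<Rightarrow> policy \<Rightarrow> real" where
  "pol_value M H \<pi> = measure_pmf.expectation (episode_pmf M \<pi> H) (\<lambda>\<tau>. sum_list (map (\<lambda>(s,a,r). r) \<tau>))"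

definition opt_value :: "nat \<Rightarrow> nat \<Rightarrow> nat \<Rightarrow> mdp \<Rightarrow> real" where
  "opt_value S A H M = (SUP \<pi>\<in>{\<pi>. valid_policy S A H \<pi>}. pol_value M H \<pi>)"

definition occupancy :: "mdp \<Rightarrow> policy \<Rightarrow> nat \<Rightarrow> nat \<Rightarrow> nat \<Rightarrow> nat \<Rightarrow> real" where
  "occupancy M \<mu> H t s a =
     measure_pmf.prob (episode_pmf M \<mu> H) {\<tau>. fst (\<tau> ! (t - 1)) = s \<and> fst (snd (\<tau> ! (t - 1))) = a}"

definition class_dm :: "nat \<Rightarrow> nat \<Rightarrow> nat \<Rightarrow> real \<Rightarrow> (policy \<times> mdp) set" where
  "class_dm S A H dm = {(\<mu>, M). valid_mdp S A H M \<and> valid_policy S A H \<mu> \<and>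
       (\<forall>t\<in>{1..H}. \<forall>s<S. \<forall>a<A. occupancy M \<mu> H t s a \<ge> dm)}"

definition data_pmf :: "nat \<Rightarrow> mdp \<Rightarrow> policy \<Rightarrow> nat \<Rightarrow> (nat \<Rightarrow> episode) pmf" where
  "data_pmf n M \<mu> H = Pi_pmf {..<n} [] (\<lambda>_. episode_pmf M \<mu> H)"

definition valid_alg :: "nat \<Rightarrow> nat \<Rightarrow> nat \<Rightarrow> ((nat \<Rightarrow> episode) \<Rightarrow> policy pmf) \<Rightarrow> bool" where
  "valid_alg S A H alg \<longleftrightarrow> (\<forall>D. \<forall>\<pi>\<in>set_pmf (alg D). valid_policy S A H \<pi>)"

definition fail_prob ::
  "nat \<Rightarrow> nat \<Rightarrow> nat \<Rightarrow> nat \<Rightarrow> real \<Rightarrow> ((nat \<Rightarrow> episode) \<Rightarrow> policy pmf) \<Rightarrow> policy \<Rightarrow> mdp \<Rightarrow> real" where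
  "fail_prob S A H n \<epsilon> alg \<mu> M =
     measure_pmf.prob (bind_pmf (data_pmf n M \<mu> H) alg)
       {\<pi>. opt_value S A H M - pol_value M H \<pi> \<ge> \<epsilon>}"

end

theory Submission
  imports Defs
begin

lemma integral_bind_pmf_bdd:
  fixes f :: "'b \<Rightarrow> real"
  assumes "\<And>x. \<bar>f x\<bar> \<le> B"
  shows "measure_pmf.expectation (bind_pmf M N) f = measure_pmf.expectation M (\<lambda>x. measure_pmf.expectation (N x) f)"
  unfolding measure_pmf_bind
  apply (rule integral_bind[where K="count_space UNIV" and B=B and B'=1])
  using assms by (auto simp: measure_pmf.emeasure_space_1 measure_pmf_in_subprob_algebra intro!: measure_pmf.finite_measure_axioms)

definition BC :: "'a pmf \<Rightarrow> 'a pmf \<Rightarrow> real" where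
  "BC P Q = (\<Sum>x\<in>set_pmf P \<union> set_pmf Q. sqrt (pmf P x * pmf Q x))"

definition ov :: "'a pmf \<Rightarrow> 'a pmf \<Rightarrow> real" where
  "ov P Q = (\<Sum>x\<in>set_pmf P \<union> set_pmf Q. min (pmf P x) (pmf Q x))"

lemma BC_nonneg: "BC P Q \<ge> 0"
  unfolding BC_def by (intro sum_nonneg) auto

lemma BC_self: "finite (set_pmf P) \<Longrightarrow> BC P P = 1"
  unfolding BC_def by (simp add: sum_pmf_eq_1)

lemma CS_sqrt:
  fixes a b :: "'i \<Rightarrow> real"
  assumes "\<And>i. i \<in> I \<Longrightarrow> a i \<ge> 0" "\<And>i. i \<in> I \<Longrightarrow> b i \<ge> 0"
  shows "(\<Sum>i\<in>I. sqrt (a i * b i)) \<le> sqrt ((\<Sum>i\<in>I. a i) * (\<Sum>i\<in>I. b i))"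
proof -
  have "(\<Sum>i\<in>I. sqrt (a i) * sqrt (b i))\<^sup>2 \<le> (\<Sum>i\<in>I. (sqrt (a i))\<^sup>2) * (\<Sum>i\<in>I. (sqrt (b i))\<^sup>2)"
    by (rule Cauchy_Schwarz_ineq_sum)
  also have "\<dots> = (\<Sum>i\<in>I. a i) * (\<Sum>i\<in>I. b i)"
    using assms by (intro arg_cong2[where f="(*)"] sum.cong) auto
  finally have "(\<Sum>i\<in>I. sqrt (a i * b i))\<^sup>2 \<le> (\<Sum>i\<in>I. a i) * (\<Sum>i\<in>I. b i)"
    by (simp add: real_sqrt_mult)
  thus ?thesis by (simp add: real_le_rsqrt)
qed

lemma pmf_bind_fin:
  assumes "finite X" "set_pmf p \<subseteq> X"
  shows "pmf (bind_pmf p F) y = (\<Sum>x\<in>X. pmf p x * pmf (F x) y)"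
  unfolding pmf_bind using assms
  by (subst integral_measure_pmf_real[of X]) (auto simp: mult.commute)

lemma BC_bind:
  assumes fp: "finite (set_pmf p)" and fq: "finite (set_pmf q)"
    and fP: "finite (set_pmf (bind_pmf p F))" and fQ: "finite (set_pmf (bind_pmf q G))"
  shows "BC (bind_pmf p F) (bind_pmf q G) \<ge> (\<Sum>x\<in>set_pmf p. sqrt (pmf p x * pmf q x) * BC (F x) (G x))"
proof -
  define X where "X = set_pmf p \<union> set_pmf q"
  define U where "U = set_pmf (bind_pmf p F) \<union> set_pmf (bind_pmf q G)"
  have fX: "finite X" using fp fq X_def by auto
  have fU: "finite U" using fP fQ U_def by auto
  have eP: "pmf (bind_pmf p F) y = (\<Sum>x\<in>X. pmf p x * pmf (F x) y)" for y
    using fX by (intro pmf_bind_fin) (auto simp: X_def)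
  have eQ: "pmf (bind_pmf q G) y = (\<Sum>x\<in>X. pmf q x * pmf (G x) y)" for y
    using fX by (intro pmf_bind_fin) (auto simp: X_def)
  have "BC (bind_pmf p F) (bind_pmf q G) = (\<Sum>y\<in>U. sqrt ((\<Sum>x\<in>X. pmf p x * pmf (F x) y) * (\<Sum>x\<in>X. pmf q x * pmf (G x) y)))"
    unfolding BC_def U_def[symmetric] by (simp add: eP eQ)
  also have "\<dots> \<ge> (\<Sum>y\<in>U. \<Sum>x\<in>X. sqrt ((pmf p x * pmf (F x) y) * (pmf q x * pmf (G x) y)))"
    by (intro sum_mono CS_sqrt) auto
  also have "(\<Sum>y\<in>U. \<Sum>x\<in>X. sqrt ((pmf p x * pmf (F x) y) * (pmf q x * pmf (G x) y)))
     = (\<Sum>x\<in>X. sqrt (pmf p x * pmf q x) * (\<Sum>y\<in>U. sqrt (pmf (F x) y * pmf (G x) y)))"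
  proof -
    have e: "sqrt ((pmf p x * pmf (F x) y) * (pmf q x * pmf (G x) y)) = sqrt (pmf p x * pmf q x) * sqrt (pmf (F x) y * pmf (G x) y)" for x y
      by (subst real_sqrt_mult[symmetric]) (simp add: mult_ac)
    show ?thesis unfolding e by (subst sum.swap) (simp add: sum_distrib_left)
  qed
  also have "\<dots> \<ge> (\<Sum>x\<in>X. sqrt (pmf p x * pmf q x) * BC (F x) (G x))"
  proof (intro sum_mono)
    fix x assume "x \<in> X"
    show "sqrt (pmf p x * pmf q x) * BC (F x) (G x) \<le> sqrt (pmf p x * pmf q x) * (\<Sum>y\<in>U. sqrt (pmf (F x) y * pmf (G x) y))"
    proof (cases "pmf p x = 0 \<or> pmf q x = 0")
      case True then show ?thesis by auto
    next
      case False
      then have "x \<in> set_pmf p" "x \<in> set_pmf q" by (auto simp: set_pmf_iff)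
      then have "set_pmf (F x) \<union> set_pmf (G x) \<subseteq> U" unfolding U_def by auto
      then have "BC (F x) (G x) \<le> (\<Sum>y\<in>U. sqrt (pmf (F x) y * pmf (G x) y))"
        unfolding BC_def using fU by (intro sum_mono2) auto
      then show ?thesis by (intro mult_left_mono) auto
    qed
  qed
  also have "(\<Sum>x\<in>X. sqrt (pmf p x * pmf q x) * BC (F x) (G x)) = (\<Sum>x\<in>set_pmf p. sqrt (pmf p x * pmf q x) * BC (F x) (G x))"
    using fX by (intro sum.mono_neutral_right) (auto simp: X_def set_pmf_iff)
  finally show ?thesis .
qed

lemma BC_alt:
  assumes "finite (set_pmf P)" "finite (set_pmf Q)"
  shows "BC P Q = (\<Sum>x\<in>set_pmf P. sqrt (pmf P x * pmf Q x))"
  unfolding BC_def using assms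
  by (intro sum.mono_neutral_right) (auto simp: set_pmf_iff)

lemma finite_set_bind:
  "finite (set_pmf p) \<Longrightarrow> (\<And>x. x \<in> set_pmf p \<Longrightarrow> finite (set_pmf (F x))) \<Longrightarrow> finite (set_pmf (bind_pmf p F))"
  by (auto simp: set_bind_pmf)

lemma BC_return: "BC (return_pmf x) (return_pmf x) = 1"
  by (rule BC_self) simp

lemma BC_Pi:
  assumes fP: "finite (set_pmf P)" and fQ: "finite (set_pmf Q)"
  shows "finite (set_pmf (Pi_pmf {..<n} d (\<lambda>_. P))) \<and> finite (set_pmf (Pi_pmf {..<n} d (\<lambda>_. Q))) \<and>
    BC (Pi_pmf {..<n} d (\<lambda>_. P)) (Pi_pmf {..<n} d (\<lambda>_. Q)) \<ge> BC P Q ^ n"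
proof (induction n)
  case 0
  then show ?case by (simp add: BC_return)
next
  case (Suc n)
  define Pn where "Pn = Pi_pmf {..<n} d (\<lambda>_. P)"
  define Qn where "Qn = Pi_pmf {..<n} d (\<lambda>_. Q)"
  have fPn: "finite (set_pmf Pn)" and fQn: "finite (set_pmf Qn)" and ih: "BC Pn Qn \<ge> BC P Q ^ n"
    using Suc.IH by (auto simp: Pn_def Qn_def)
  have eP: "Pi_pmf {..<Suc n} d (\<lambda>_. P) = bind_pmf P (\<lambda>y. bind_pmf Pn (\<lambda>f. return_pmf (f(n := y))))"
    unfolding Pn_def lessThan_Suc by (subst Pi_pmf_insert') auto
  have eQ: "Pi_pmf {..<Suc n} d (\<lambda>_. Q) = bind_pmf Q (\<lambda>y. bind_pmf Qn (\<lambda>f. return_pmf (f(n := y))))"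
    unfolding Qn_def lessThan_Suc by (subst Pi_pmf_insert') auto
  have fin1: "finite (set_pmf (bind_pmf P (\<lambda>y. bind_pmf Pn (\<lambda>f. return_pmf (f(n := y))))))"
    using fP fPn by (intro finite_set_bind) auto
  have fin2: "finite (set_pmf (bind_pmf Q (\<lambda>y. bind_pmf Qn (\<lambda>f. return_pmf (f(n := y))))))"
    using fQ fQn by (intro finite_set_bind) auto
  have inner: "BC (bind_pmf Pn (\<lambda>f. return_pmf (f(n := y)))) (bind_pmf Qn (\<lambda>f. return_pmf (f(n := y)))) \<ge> BC Pn Qn" for y
  proof -
    have "BC (bind_pmf Pn (\<lambda>f. return_pmf (f(n := y)))) (bind_pmf Qn (\<lambda>f. return_pmf (f(n := y))))
       \<ge> (\<Sum>x\<in>set_pmf Pn. sqrt (pmf Pn x * pmf Qn x) * BC (return_pmf (x(n := y))) (return_pmf (x(n := y))))"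
      using fPn fQn by (intro BC_bind finite_set_bind) auto
    also have "(\<Sum>x\<in>set_pmf Pn. sqrt (pmf Pn x * pmf Qn x) * BC (return_pmf (x(n := y))) (return_pmf (x(n := y)))) = BC Pn Qn"
      using fPn fQn by (simp add: BC_return BC_alt)
    finally show ?thesis .
  qed
  have "BC (Pi_pmf {..<Suc n} d (\<lambda>_. P)) (Pi_pmf {..<Suc n} d (\<lambda>_. Q))
     \<ge> (\<Sum>y\<in>set_pmf P. sqrt (pmf P y * pmf Q y) * BC (bind_pmf Pn (\<lambda>f. return_pmf (f(n := y)))) (bind_pmf Qn (\<lambda>f. return_pmf (f(n := y)))))"
    unfolding eP eQ using fP fQ fin1 fin2 by (intro BC_bind) auto
  also have "(\<Sum>y\<in>set_pmf P. sqrt (pmf P y * pmf Q y) * BC (bind_pmf Pn (\<lambda>f. return_pmf (f(n := y)))) (bind_pmf Qn (\<lambda>f. return_pmf (f(n := y))))) \<ge> (\<Sum>y\<in>set_pmf P. sqrt (pmf P y * pmf Q y) * BC Pn Qn)"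
    by (intro sum_mono mult_left_mono inner) auto
  also have "(\<Sum>y\<in>set_pmf P. sqrt (pmf P y * pmf Q y) * BC Pn Qn) = BC P Q * BC Pn Qn"
    using fP fQ by (simp add: BC_alt sum_distrib_right)
  also have "BC P Q * BC Pn Qn \<ge> BC P Q * BC P Q ^ n"
    using ih BC_nonneg by (intro mult_left_mono) auto
  finally show ?case using fin1 fin2 eP eQ by simp
qed

lemma ov_BC:
  assumes "finite (set_pmf P)" "finite (set_pmf Q)"
  shows "ov P Q \<ge> (BC P Q)\<^sup>2 / 2"
proof -
  define U where "U = set_pmf P \<union> set_pmf Q"
  have fU: "finite U" using assms U_def by auto
  have "BC P Q = (\<Sum>x\<in>U. sqrt (min (pmf P x) (pmf Q x) * max (pmf P x) (pmf Q x)))"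
    unfolding BC_def U_def[symmetric] by (intro sum.cong) (auto simp: min_def max_def mult.commute)
  also have "\<dots> \<le> sqrt ((\<Sum>x\<in>U. min (pmf P x) (pmf Q x)) * (\<Sum>x\<in>U. max (pmf P x) (pmf Q x)))"
    by (intro CS_sqrt) (auto simp: le_max_iff_disj)
  finally have 1: "BC P Q \<le> sqrt (ov P Q * (\<Sum>x\<in>U. max (pmf P x) (pmf Q x)))"
    unfolding ov_def U_def .
  have "(\<Sum>x\<in>U. max (pmf P x) (pmf Q x)) \<le> (\<Sum>x\<in>U. pmf P x + pmf Q x)"
    by (intro sum_mono) auto
  also have "\<dots> = 2" using fU by (simp add: sum.distrib sum_pmf_eq_1 U_def)
  finally have 2: "(\<Sum>x\<in>U. max (pmf P x) (pmf Q x)) \<le> 2" .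
  have ovn: "ov P Q \<ge> 0" unfolding ov_def by (intro sum_nonneg) auto
  have "(BC P Q)\<^sup>2 \<le> ov P Q * (\<Sum>x\<in>U. max (pmf P x) (pmf Q x))"
    using 1 BC_nonneg[of P Q] ovn
    by (metis (no_types, lifting) abs_of_nonneg order_trans_rules(23) real_sqrt_abs real_sqrt_le_iff sum_nonneg max.coboundedI1 pmf_nonneg zero_le_mult_iff)
  also have "\<dots> \<le> ov P Q * 2" using 2 ovn by (intro mult_left_mono) auto
  finally show ?thesis by simp
qed

lemma prob_bind_fin:
  assumes "finite (set_pmf P)"
  shows "measure_pmf.prob (bind_pmf P alg) E = (\<Sum>D\<in>set_pmf P. pmf P D * measure_pmf.prob (alg D) E)"
proof -
  have "measure_pmf.prob (bind_pmf P alg) E = measure_pmf.expectation (bind_pmf P alg) (indicator E)"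
    by simp
  also have "\<dots> = measure_pmf.expectation P (\<lambda>D. measure_pmf.expectation (alg D) (indicator E))"
    by (rule integral_bind_pmf_bdd[where B=1]) (auto simp: indicator_def)
  also have "\<dots> = measure_pmf.expectation P (\<lambda>D. measure_pmf.prob (alg D) E)"
    by simp
  also have "\<dots> = (\<Sum>D\<in>set_pmf P. measure_pmf.prob (alg D) E * pmf P D)"
    using assms by (intro integral_measure_pmf_real) auto
  finally show ?thesis by (simp add: mult.commute)
qed

lemma ov_alg:
  assumes fP: "finite (set_pmf P)" and fQ: "finite (set_pmf Q)" and EF: "\<And>x. x \<in> E \<or> x \<in> F"
  shows "measure_pmf.prob (bind_pmf P alg) E + measure_pmf.prob (bind_pmf Q alg) F \<ge> ov P Q"
proof -
  define U where "U = set_pmf P \<union> set_pmf Q"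
  have fU: "finite U" using fP fQ U_def by auto
  have 1: "measure_pmf.prob (bind_pmf P alg) E = (\<Sum>D\<in>U. pmf P D * measure_pmf.prob (alg D) E)"
    unfolding prob_bind_fin[OF fP] using fU by (intro sum.mono_neutral_left) (auto simp: U_def set_pmf_iff)
  have 2: "measure_pmf.prob (bind_pmf Q alg) F = (\<Sum>D\<in>U. pmf Q D * measure_pmf.prob (alg D) F)"
    unfolding prob_bind_fin[OF fQ] using fU by (intro sum.mono_neutral_left) (auto simp: U_def set_pmf_iff)
  have 3: "measure_pmf.prob (alg D) E + measure_pmf.prob (alg D) F \<ge> 1" for D
  proof -
    have "E \<union> F = UNIV" using EF by auto
    then have "1 = measure_pmf.prob (alg D) (E \<union> F)" by simp
    also have "\<dots> \<le> measure_pmf.prob (alg D) E + measure_pmf.prob (alg D) F"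
      by (rule measure_Un_le) auto
    finally show ?thesis .
  qed
  have "ov P Q = (\<Sum>D\<in>U. min (pmf P D) (pmf Q D))" unfolding ov_def U_def ..
  also have "\<dots> \<le> (\<Sum>D\<in>U. pmf P D * measure_pmf.prob (alg D) E + pmf Q D * measure_pmf.prob (alg D) F)"
  proof (intro sum_mono)
    fix D
    have a: "min (pmf P D) (pmf Q D) * (measure_pmf.prob (alg D) E + measure_pmf.prob (alg D) F) \<ge> min (pmf P D) (pmf Q D)"
      using 3[of D] by (metis mult.right_neutral mult_left_mono min.boundedI pmf_nonneg)
    have b: "min (pmf P D) (pmf Q D) * measure_pmf.prob (alg D) E \<le> pmf P D * measure_pmf.prob (alg D) E"
      by (intro mult_right_mono) auto
    have c: "min (pmf P D) (pmf Q D) * measure_pmf.prob (alg D) F \<le> pmf Q D * measure_pmf.prob (alg D) F"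
      by (intro mult_right_mono) auto
    show "min (pmf P D) (pmf Q D) \<le> pmf P D * measure_pmf.prob (alg D) E + pmf Q D * measure_pmf.prob (alg D) F"
      using a b c by (simp add: distrib_left)
  qed
  also have "\<dots> = measure_pmf.prob (bind_pmf P alg) E + measure_pmf.prob (bind_pmf Q alg) F"
    unfolding 1 2 sum.distrib ..
  finally show ?thesis .
qed

lemma integral_bind_pmf_supp:
  fixes f :: "'b \<Rightarrow> real"
  assumes "\<And>x. x \<in> set_pmf (bind_pmf M N) \<Longrightarrow> \<bar>f x\<bar> \<le> B"
  shows "measure_pmf.expectation (bind_pmf M N) f = measure_pmf.expectation M (\<lambda>x. measure_pmf.expectation (N x) f)"
proof -
  define g where "g = (\<lambda>x. max (-\<bar>B\<bar>) (min \<bar>B\<bar> (f x)))"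
  have fg: "x \<in> set_pmf (bind_pmf M N) \<Longrightarrow> g x = f x" for x
    using assms[of x] unfolding g_def by auto
  have "measure_pmf.expectation (bind_pmf M N) f = measure_pmf.expectation (bind_pmf M N) g"
    by (intro integral_cong_AE) (auto simp: AE_measure_pmf_iff fg)
  also have "\<dots> = measure_pmf.expectation M (\<lambda>x. measure_pmf.expectation (N x) g)"
    by (rule integral_bind_pmf_bdd[where B="\<bar>B\<bar>"]) (auto simp: g_def)
  also have "\<dots> = measure_pmf.expectation M (\<lambda>x. measure_pmf.expectation (N x) f)"
  proof (intro integral_cong_AE)
    show "AE x in measure_pmf M. measure_pmf.expectation (N x) g = measure_pmf.expectation (N x) f"
      unfolding AE_measure_pmf_iff
    proof
      fix x assume x: "x \<in> set_pmf M"
      have fg': "y \<in> set_pmf (N x) \<Longrightarrow> g y = f y" for y using fg x by (auto simp: set_bind_pmf)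
      show "measure_pmf.expectation (N x) g = measure_pmf.expectation (N x) f"
        using x by (intro integral_cong_AE) (auto simp: AE_measure_pmf_iff fg')
    qed
  qed auto
  finally show ?thesis .
qed

lemma integrable_pmf_bdd:
  fixes f :: "'b \<Rightarrow> real"
  assumes "\<And>x. x \<in> set_pmf M \<Longrightarrow> \<bar>f x\<bar> \<le> B"
  shows "integrable (measure_pmf M) f"
  by (rule measure_pmf.integrable_const_bound[where B=B]) (auto simp: AE_measure_pmf_iff assms)

definition rsum :: "episode \<Rightarrow> real" where
  "rsum \<tau> = sum_list (map (\<lambda>(s,a,r). r) \<tau>)"

definition rb :: "mdp \<Rightarrow> bool" where
  "rb M \<longleftrightarrow> (\<forall>t s a. 0 \<le> rew M t s a \<and> rew M t s a \<le> 1)"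

definition Vf :: "mdp \<Rightarrow> policy \<Rightarrow> nat \<Rightarrow> nat \<Rightarrow> nat \<Rightarrow> real" where
  "Vf M \<pi> t s k = measure_pmf.expectation (traj M \<pi> t s k) rsum"

lemma rsum_Cons[simp]: "rsum ((s,a,r) # \<tau>) = r + rsum \<tau>"
  by (simp add: rsum_def)

lemma rsum_Nil[simp]: "rsum [] = 0"
  by (simp add: rsum_def)

lemma traj_sum_bound:
  assumes "rb M"
  shows "\<tau> \<in> set_pmf (traj M \<pi> t s k) \<Longrightarrow> 0 \<le> rsum \<tau> \<and> rsum \<tau> \<le> real k"
proof (induction k arbitrary: t s \<tau>)
  case 0
  then show ?case by simp
next
  case (Suc k)
  from Suc.prems obtain a s' rest where "\<tau> = (s, a, rew M t s a) # rest" "rest \<in> set_pmf (traj M \<pi> (Suc t) s' k)"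
    by (auto simp: set_bind_pmf)
  moreover have "0 \<le> rew M t s a" "rew M t s a \<le> 1" using assms by (auto simp: rb_def)
  ultimately show ?case using Suc.IH[of rest "Suc t" s'] by auto
qed

lemma Vf_bound:
  assumes "rb M"
  shows "0 \<le> Vf M \<pi> t s k \<and> Vf M \<pi> t s k \<le> real k"
proof -
  have b: "\<And>\<tau>. \<tau> \<in> set_pmf (traj M \<pi> t s k) \<Longrightarrow> 0 \<le> rsum \<tau> \<and> rsum \<tau> \<le> real k"
    using traj_sum_bound[OF assms] by blast
  have i: "integrable (measure_pmf (traj M \<pi> t s k)) rsum"
    using b by (intro integrable_pmf_bdd[where B="real k"]) force
  have "0 \<le> Vf M \<pi> t s k" unfolding Vf_def
    using b by (intro integral_nonneg_AE) (auto simp: AE_measure_pmf_iff)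
  moreover have "Vf M \<pi> t s k \<le> measure_pmf.expectation (traj M \<pi> t s k) (\<lambda>_. real k)" unfolding Vf_def
    using b i by (intro integral_mono_AE) (auto simp: AE_measure_pmf_iff)
  ultimately show ?thesis by simp
qed

lemma Vf_0[simp]: "Vf M \<pi> t s 0 = 0"
  by (simp add: Vf_def)

lemma Vf_Suc:
  assumes "rb M"
  shows "Vf M \<pi> t s (Suc k) = measure_pmf.expectation (\<pi> t s) (\<lambda>a. rew M t s a +
            measure_pmf.expectation (trans M s a) (\<lambda>s'. Vf M \<pi> (Suc t) s' k))"
proof -
  have bnd: "\<And>t s k \<tau>. \<tau> \<in> set_pmf (traj M \<pi> t s k) \<Longrightarrow> \<bar>rsum \<tau>\<bar> \<le> real k"
    using traj_sum_bound[OF assms] by fastforce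
  have "Vf M \<pi> t s (Suc k) = measure_pmf.expectation (\<pi> t s) (\<lambda>a. measure_pmf.expectation
     (bind_pmf (trans M s a) (\<lambda>s'. map_pmf (\<lambda>rest. (s, a, rew M t s a) # rest) (traj M \<pi> (Suc t) s' k))) rsum)"
    unfolding Vf_def traj.simps
    by (rule integral_bind_pmf_supp[where B="real (Suc k)"]) (rule bnd, simp)
  also have "\<dots> = measure_pmf.expectation (\<pi> t s) (\<lambda>a. rew M t s a +
            measure_pmf.expectation (trans M s a) (\<lambda>s'. Vf M \<pi> (Suc t) s' k))"
  proof (rule Bochner_Integration.integral_cong[OF refl])
    fix a
    have "measure_pmf.expectation
       (bind_pmf (trans M s a) (\<lambda>s'. map_pmf (\<lambda>rest. (s, a, rew M t s a) # rest) (traj M \<pi> (Suc t) s' k))) rsum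
      = measure_pmf.expectation (trans M s a) (\<lambda>s'. measure_pmf.expectation (map_pmf (\<lambda>rest. (s, a, rew M t s a) # rest) (traj M \<pi> (Suc t) s' k)) rsum)"
    proof (rule integral_bind_pmf_supp[where B="real (Suc k)"])
      fix x assume "x \<in> set_pmf (bind_pmf (trans M s a) (\<lambda>s'. map_pmf (\<lambda>rest. (s,a,rew M t s a) # rest) (traj M \<pi> (Suc t) s' k)))"
      then obtain s' rest where r: "rest \<in> set_pmf (traj M \<pi> (Suc t) s' k)" "x = (s,a,rew M t s a) # rest"
        by (auto simp: set_bind_pmf)
      have "0 \<le> rew M t s a" "rew M t s a \<le> 1" using assms by (auto simp: rb_def)
      then show "\<bar>rsum x\<bar> \<le> real (Suc k)" using traj_sum_bound[OF assms r(1)] r(2) by auto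
    qed
    also have "\<dots> = measure_pmf.expectation (trans M s a) (\<lambda>s'. rew M t s a + Vf M \<pi> (Suc t) s' k)"
    proof (rule Bochner_Integration.integral_cong[OF refl])
      fix s'
      have i: "integrable (measure_pmf (traj M \<pi> (Suc t) s' k)) rsum"
        using bnd by (intro integrable_pmf_bdd[where B="real k"]) force
      show "measure_pmf.expectation (map_pmf (\<lambda>rest. (s, a, rew M t s a) # rest) (traj M \<pi> (Suc t) s' k)) rsum
           = rew M t s a + Vf M \<pi> (Suc t) s' k"
        using i by (simp add: Vf_def)
    qed
    also have "\<dots> = rew M t s a + measure_pmf.expectation (trans M s a) (\<lambda>s'. Vf M \<pi> (Suc t) s' k)"
    proof -
      have "integrable (measure_pmf (trans M s a)) (\<lambda>s'. Vf M \<pi> (Suc t) s' k)"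
      proof (rule integrable_pmf_bdd[where B="real k"])
        fix x show "\<bar>Vf M \<pi> (Suc t) x k\<bar> \<le> real k" using Vf_bound[OF assms, of \<pi> "Suc t" x k] by auto
      qed
      then show ?thesis by simp
    qed
    finally show "measure_pmf.expectation
       (bind_pmf (trans M s a) (\<lambda>s'. map_pmf (\<lambda>rest. (s, a, rew M t s a) # rest) (traj M \<pi> (Suc t) s' k))) rsum
      = rew M t s a + measure_pmf.expectation (trans M s a) (\<lambda>s'. Vf M \<pi> (Suc t) s' k)" .
  qed
  finally show ?thesis .
qed

lemma pol_value_Vf:
  assumes "rb M"
  shows "pol_value M H \<pi> = measure_pmf.expectation (init M) (\<lambda>s. Vf M \<pi> 1 s H)"
proof -
  have bnd: "\<And>t s k \<tau>. \<tau> \<in> set_pmf (traj M \<pi> t s k) \<Longrightarrow> \<bar>rsum \<tau>\<bar> \<le> real k"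
    using traj_sum_bound[OF assms] by fastforce
  have e: "(\<lambda>\<tau>. sum_list (map (\<lambda>(s,a,r). r) \<tau>)) = rsum" by (simp add: rsum_def fun_eq_iff)
  show ?thesis unfolding pol_value_def episode_pmf_def e Vf_def
    by (rule integral_bind_pmf_supp[where B="real H"]) (auto simp: set_bind_pmf intro: bnd simp del: traj.simps)
qed

lemma marg:
  assumes pi: "\<And>t s. \<pi> t s = \<mu>0" and inv: "\<And>a. bind_pmf \<nu> (\<lambda>s. trans M s a) = \<nu>"
  shows "j < k \<Longrightarrow> map_pmf (\<lambda>\<tau>. (fst (\<tau>!j), fst (snd (\<tau>!j)))) (bind_pmf \<nu> (\<lambda>s. traj M \<pi> t s k)) = pair_pmf \<nu> \<mu>0"
proof (induction j arbitrary: t k)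
  case 0
  then obtain k' where k: "k = Suc k'" by (cases k) auto
  have "map_pmf (\<lambda>\<tau>. (fst (\<tau>!0), fst (snd (\<tau>!0)))) (bind_pmf \<nu> (\<lambda>s. traj M \<pi> t s k))
      = bind_pmf \<nu> (\<lambda>s. bind_pmf \<mu>0 (\<lambda>a. bind_pmf (trans M s a) (\<lambda>s'. return_pmf (s, a))))"
    unfolding k traj.simps pi by (simp add: map_bind_pmf map_pmf_comp map_pmf_const)
  also have "\<dots> = pair_pmf \<nu> \<mu>0"
    by (simp add: pair_pmf_def bind_pmf_const)
  finally show ?case .
next
  case (Suc j)
  then obtain k' where k: "k = Suc k'" and jk: "j < k'" by (cases k) auto
  define f where "f = (\<lambda>\<tau>::episode. (fst (\<tau>!j), fst (snd (\<tau>!j))))"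
  have "map_pmf (\<lambda>\<tau>. (fst (\<tau>!Suc j), fst (snd (\<tau>!Suc j)))) (bind_pmf \<nu> (\<lambda>s. traj M \<pi> t s k))
      = bind_pmf \<nu> (\<lambda>s. bind_pmf \<mu>0 (\<lambda>a. bind_pmf (trans M s a) (\<lambda>s'. map_pmf f (traj M \<pi> (Suc t) s' k'))))"
    unfolding k traj.simps pi by (simp add: map_bind_pmf map_pmf_comp f_def)
  also have "\<dots> = bind_pmf (bind_pmf \<nu> (\<lambda>s. bind_pmf \<mu>0 (\<lambda>a. trans M s a))) (\<lambda>s'. map_pmf f (traj M \<pi> (Suc t) s' k'))"
    by (simp add: bind_assoc_pmf)
  also have "bind_pmf \<nu> (\<lambda>s. bind_pmf \<mu>0 (\<lambda>a. trans M s a)) = \<nu>"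
    by (subst bind_commute_pmf) (simp add: inv bind_pmf_const)
  also have "bind_pmf \<nu> (\<lambda>s'. map_pmf f (traj M \<pi> (Suc t) s' k')) = map_pmf f (bind_pmf \<nu> (\<lambda>s'. traj M \<pi> (Suc t) s' k'))"
    by (simp add: map_bind_pmf)
  also have "\<dots> = pair_pmf \<nu> \<mu>0" unfolding f_def by (rule Suc.IH[OF jk])
  finally show ?case .
qed

definition flip_pmf :: "nat \<Rightarrow> nat \<Rightarrow> real \<Rightarrow> nat pmf" where
  "flip_pmf u v q = map_pmf (\<lambda>b. if b then u else v) (bernoulli_pmf q)"

lemma pmf_flip:
  assumes "0 \<le> q" "q \<le> 1"
  shows "pmf (flip_pmf u v q) w = (if u = v then (if w = u then 1 else 0)
           else (if w = u then q else 0) + (if w = v then 1 - q else 0))"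
  unfolding flip_pmf_def map_pmf_def using assms
  by (subst pmf_bind_fin[of UNIV]) (auto simp: UNIV_bool pmf_return indicator_def)

lemma set_flip: "set_pmf (flip_pmf u v q) \<subseteq> {u, v}"
  unfolding flip_pmf_def by auto

lemma integral_flip:
  fixes f :: "nat \<Rightarrow> real"
  assumes "0 \<le> q" "q \<le> 1"
  shows "measure_pmf.expectation (flip_pmf u v q) f = q * f u + (1 - q) * f v"
  unfolding flip_pmf_def using assms by (simp add: mult.commute)

locale inst =
  fixes S A H :: nat and dm \<delta> :: real
  assumes S3: "S \<ge> 3" and A3: "A \<ge> 3" and H2: "H \<ge> 2"
    and dm_pos: "0 < dm" and dm_le: "dm \<le> 1 / (real S * real A)"
    and \<delta>_pos: "0 < \<delta>" and \<delta>_le: "\<delta> \<le> 1 / (8 * real H)"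
begin

definition m :: nat where "m = S div 2"
definition q0 :: real where "q0 = 1 / (4 * real H)"
definition \<theta> :: real where "\<theta> = real S * dm"

definition partner :: "nat \<Rightarrow> nat" where
  "partner s = (if s < 2 * m then (if even s then s + 1 else s - 1) else s)"

definition qq :: "bool \<Rightarrow> nat \<Rightarrow> real" where
  "qq b a = (if a = 1 then (if b then q0 + \<delta> else q0 - \<delta>) else if a = 2 then (if b then q0 - \<delta> else q0 + \<delta>) else 0)"

definition qa :: "nat set \<Rightarrow> nat \<Rightarrow> nat \<Rightarrow> real" where
  "qa \<sigma> s a = (if s < 2 * m then qq (s div 2 \<in> \<sigma>) a else 0)"

definition trM :: "nat set \<Rightarrow> nat \<Rightarrow> nat \<Rightarrow> nat pmf" where
  "trM \<sigma> s a = flip_pmf (partner s) s (qa \<sigma> s a)"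

definition rewM :: "nat \<Rightarrow> nat \<Rightarrow> nat \<Rightarrow> real" where
  "rewM t s a = (if s < 2 * m \<and> odd s then 1 else 0)"

definition \<nu> :: "nat pmf" where "\<nu> = pmf_of_set {..<S}"

definition MM :: "nat set \<Rightarrow> mdp" where
  "MM \<sigma> = \<lparr>init = \<nu>, trans = trM \<sigma>, rew = rewM\<rparr>"

definition \<mu>0 :: "nat pmf" where
  "\<mu>0 = bind_pmf (bernoulli_pmf (2 * \<theta>)) (\<lambda>b. if b then pmf_of_set {1, 2} else pmf_of_set ({..<A} - {1, 2}))"

definition \<mu> :: policy where "\<mu> = (\<lambda>t s. \<mu>0)"

definition pistar :: "nat set \<Rightarrow> policy" where
  "pistar \<sigma> = (\<lambda>t s. return_pmf (if s < 2 * m \<and> even s then (if s div 2 \<in> \<sigma> then 1 else 2) else 0))"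

lemma m_ge: "real m \<ge> real S / 3" "m \<ge> 1" "2 * m \<le> S"
  using S3 unfolding m_def by linarith+

lemma q0_pos: "0 < q0" and q0_le: "q0 \<le> 1 / 8"
  using H2 unfolding q0_def by (auto simp: field_simps)

lemma \<delta>_q0: "\<delta> \<le> q0 / 2"
  using \<delta>_le unfolding q0_def by (simp add: field_simps)

lemma qq_bounds: "0 \<le> qq b a" "qq b a \<le> q0 + \<delta>" "qq b a \<le> 1"
  using q0_pos q0_le \<delta>_q0 \<delta>_pos unfolding qq_def by auto

lemma qa_bounds: "0 \<le> qa \<sigma> s a" "qa \<sigma> s a \<le> 1"
  using qq_bounds unfolding qa_def by auto

lemma \<theta>_bounds: "0 < \<theta>" "\<theta> * real A \<le> 1" "\<theta> \<le> 1 / 3"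
proof -
  show "0 < \<theta>" using dm_pos S3 unfolding \<theta>_def by auto
  show 2: "\<theta> * real A \<le> 1" using dm_le S3 A3 unfolding \<theta>_def by (simp add: field_simps)
  have "\<theta> * 3 \<le> \<theta> * real A" using A3 \<open>0 < \<theta>\<close> by (intro mult_left_mono) auto
  then show "\<theta> \<le> 1 / 3" using 2 by linarith
qed

lemma partner_lt: "s < S \<Longrightarrow> partner s < S"
  using m_ge(3) unfolding partner_def by (simp split: if_split; presburger)

lemma partner_invol: "partner (partner s) = s"
  unfolding partner_def by (simp split: if_split; presburger)

lemma partner_div: "s < 2 * m \<Longrightarrow> partner s div 2 = s div 2 \<and> partner s < 2 * m \<and> partner s \<noteq> s"
  unfolding partner_def by (simp split: if_split; presburger)

lemma qa_partner: "qa \<sigma> (partner s) a = qa \<sigma> s a"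
proof (cases "s < 2 * m")
  case True
  then show ?thesis using partner_div[OF True] unfolding qa_def by simp
next
  case False
  then have "partner s = s" unfolding partner_def by simp
  then show ?thesis by simp
qed

lemma set_trM: "set_pmf (trM \<sigma> s a) \<subseteq> {partner s, s}"
  unfolding trM_def by (rule set_flip)

lemma finite_trM: "finite (set_pmf (trM \<sigma> s a))"
  using set_trM by (rule finite_subset) auto

lemma neA: "{..<A} - {1,2::nat} \<noteq> {}"
proof -
  have "0 \<in> {..<A} - {1,2::nat}" using A3 by auto
  then show ?thesis by blast
qed

lemma set_\<mu>0: "set_pmf \<mu>0 \<subseteq> {..<A}"
proof
  fix a assume "a \<in> set_pmf \<mu>0"
  then obtain b where b: "a \<in> set_pmf (if b then pmf_of_set {1,2} else pmf_of_set ({..<A}-{1,2::nat}))"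
    unfolding \<mu>0_def set_bind_pmf by blast
  have s1: "set_pmf (pmf_of_set {1,2::nat}) = {1,2}" by (intro set_pmf_of_set) auto
  have s2: "set_pmf (pmf_of_set ({..<A}-{1,2})) = {..<A}-{1,2::nat}" using neA by (intro set_pmf_of_set) auto
  have "a \<in> {1,2} \<union> ({..<A}-{1,2})" using b s1 s2 by (cases b) auto
  then show "a \<in> {..<A}" using A3 by auto
qed

lemma finite_\<mu>0: "finite (set_pmf \<mu>0)"
  using set_\<mu>0 by (rule finite_subset) auto

lemma pmf_\<mu>0: "pmf \<mu>0 a = (if a \<in> {1, 2} then \<theta> else if a < A then (1 - 2 * \<theta>) / (real A - 2) else 0)"
proof -
  have t: "0 \<le> 2 * \<theta>" "2 * \<theta> \<le> 1" using \<theta>_bounds by auto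
  have fin: "finite ({..<A} - {1,2::nat})" by auto
  have ne: "{..<A} - {1,2::nat} \<noteq> {}" by (rule neA)
  have c: "card ({..<A} - {1,2::nat}) = A - 2" using A3 by (subst card_Diff_subset) auto
  have "pmf \<mu>0 a = (\<Sum>b\<in>UNIV. pmf (bernoulli_pmf (2 * \<theta>)) b * pmf (if b then pmf_of_set {1, 2} else pmf_of_set ({..<A} - {1, 2})) a)"
    unfolding \<mu>0_def by (rule pmf_bind_fin) auto
  also have "\<dots> = 2 * \<theta> * pmf (pmf_of_set {1,2::nat}) a + (1 - 2 * \<theta>) * pmf (pmf_of_set ({..<A} - {1,2})) a"
    using t by (simp add: UNIV_bool)
  also have "\<dots> = (if a \<in> {1, 2} then \<theta> else if a < A then (1 - 2 * \<theta>) / (real A - 2) else 0)"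
    using ne fin c A3 by (auto simp: indicator_def of_nat_diff)
  finally show ?thesis .
qed

lemma pmf_\<mu>0_ge: "a < A \<Longrightarrow> pmf \<mu>0 a \<ge> \<theta>"
proof -
  assume a: "a < A"
  have "\<theta> * (real A - 2) \<le> 1 - 2 * \<theta>" using \<theta>_bounds by (simp add: algebra_simps)
  then have "\<theta> \<le> (1 - 2 * \<theta>) / (real A - 2)" using A3 by (simp add: field_simps)
  then show ?thesis using a unfolding pmf_\<mu>0 by auto
qed

lemma inv_\<nu>: "bind_pmf \<nu> (\<lambda>s. trM \<sigma> s a) = \<nu>"
proof (rule pmf_eqI)
  fix w
  have "0 \<in> {..<S}" using S3 by auto
  then have ne: "{..<S} \<noteq> {}" by blast
  have "pmf (bind_pmf \<nu> (\<lambda>s. trM \<sigma> s a)) w = (\<Sum>s\<in>{..<S}. pmf (trM \<sigma> s a) w) / real S"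
    unfolding \<nu>_def by (subst pmf_bind_pmf_of_set) (use ne in auto)
  also have "(\<Sum>s\<in>{..<S}. pmf (trM \<sigma> s a) w) = (if w < S then 1 else 0)"
  proof (cases "w < S")
    case False
    have "pmf (trM \<sigma> s a) w = 0" if "s < S" for s
      using set_trM[of \<sigma> s a] partner_lt[OF that] that False by (auto simp: set_pmf_iff)
    then show ?thesis using False by simp
  next
    case True
    show ?thesis
    proof (cases "partner w = w")
      case pw: True
      have "(\<Sum>s\<in>{..<S}. pmf (trM \<sigma> s a) w) = (\<Sum>s\<in>{w}. pmf (trM \<sigma> s a) w)"
      proof (rule sum.mono_neutral_right)
        show "\<forall>s\<in>{..<S} - {w}. pmf (trM \<sigma> s a) w = 0"
        proof
          fix s assume s: "s \<in> {..<S} - {w}"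
          have "partner s \<noteq> w" using pw s partner_invol by (metis DiffD2 singletonI)
          then show "pmf (trM \<sigma> s a) w = 0" using set_trM[of \<sigma> s a] s by (auto simp: set_pmf_iff)
        qed
      qed (use True in auto)
      also have "\<dots> = 1" using pw qa_bounds unfolding trM_def by (simp add: pmf_flip)
      finally show ?thesis using True by simp
    next
      case pw: False
      have "(\<Sum>s\<in>{..<S}. pmf (trM \<sigma> s a) w) = (\<Sum>s\<in>{w, partner w}. pmf (trM \<sigma> s a) w)"
      proof (rule sum.mono_neutral_right)
        show "\<forall>s\<in>{..<S} - {w, partner w}. pmf (trM \<sigma> s a) w = 0"
        proof
          fix s assume s: "s \<in> {..<S} - {w, partner w}"
          have "partner s \<noteq> w" using s partner_invol by (metis DiffD2 insertI1 insertI2)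
          then show "pmf (trM \<sigma> s a) w = 0" using set_trM[of \<sigma> s a] s by (auto simp: set_pmf_iff)
        qed
      qed (use True partner_lt in auto)
      also have "\<dots> = pmf (trM \<sigma> w a) w + pmf (trM \<sigma> (partner w) a) w" using pw by simp
      also have "\<dots> = 1" using pw qa_bounds[of \<sigma> w a] qa_partner[of \<sigma> w a] partner_invol[of w]
        unfolding trM_def by (simp add: pmf_flip)
      finally show ?thesis using True by simp
    qed
  qed
  also have "(if w < S then 1 else 0) / real S = pmf \<nu> w"
    unfolding \<nu>_def using ne by (simp add: indicator_def)
  finally show "pmf (bind_pmf \<nu> (\<lambda>s. trM \<sigma> s a)) w = pmf \<nu> w" .
qed

lemma rb_MM: "rb (MM \<sigma>)"
  unfolding rb_def MM_def rewM_def by auto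

lemma valid_MM: "valid_mdp S A H (MM \<sigma>)"
proof -
  have "0 \<in> {..<S}" using S3 by auto
  then have ne: "{..<S} \<noteq> {}" by blast
  have 1: "set_pmf \<nu> \<subseteq> {..<S}" unfolding \<nu>_def using ne by simp
  have 2: "set_pmf (trM \<sigma> s a) \<subseteq> {..<S}" if "s < S" for s a
    using set_trM[of \<sigma> s a] partner_lt[OF that] that by auto
  have 3: "0 \<le> rewM t s a \<and> rewM t s a \<le> 1" for t s a unfolding rewM_def by auto
  show ?thesis unfolding valid_mdp_def MM_def using 1 2 3 by simp
qed

lemma valid_\<mu>: "valid_policy S A H \<mu>"
  unfolding valid_policy_def \<mu>_def using set_\<mu>0 by auto

lemma valid_pistar: "valid_policy S A H (pistar \<sigma>)"
  unfolding valid_policy_def pistar_def using A3 by auto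

lemma occupancy_MM:
  assumes t: "t \<in> {1..H}" and s: "s < S" and a: "a < A"
  shows "occupancy (MM \<sigma>) \<mu> H t s a \<ge> dm"
proof -
  define f where "f = (\<lambda>\<tau>::episode. (fst (\<tau>!(t-1)), fst (snd (\<tau>!(t-1)))))"
  have "occupancy (MM \<sigma>) \<mu> H t s a = measure_pmf.prob (map_pmf f (episode_pmf (MM \<sigma>) \<mu> H)) {(s, a)}"
    unfolding occupancy_def f_def by (simp add: vimage_def)
  also have "episode_pmf (MM \<sigma>) \<mu> H = bind_pmf \<nu> (\<lambda>s. traj (MM \<sigma>) \<mu> 1 s H)"
    by (simp add: episode_pmf_def MM_def)
  also have "map_pmf f (bind_pmf \<nu> (\<lambda>s. traj (MM \<sigma>) \<mu> 1 s H)) = pair_pmf \<nu> \<mu>0"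
    unfolding f_def
  proof (rule marg)
    show "\<And>t s. \<mu> t s = \<mu>0" by (simp add: \<mu>_def)
    show "\<And>a. bind_pmf \<nu> (\<lambda>s. trans (MM \<sigma>) s a) = \<nu>" by (simp add: MM_def inv_\<nu>)
    show "t - 1 < H" using t by auto
  qed
  also have "measure_pmf.prob (pair_pmf \<nu> \<mu>0) {(s, a)} = pmf \<mu>0 a / real S"
  proof -
    have "0 \<in> {..<S}" using S3 by auto
    then have ne: "{..<S} \<noteq> {}" by blast
    then show ?thesis using s by (simp add: measure_pmf_single pmf_pair \<nu>_def indicator_def)
  qed
  also have "\<dots> \<ge> \<theta> / real S" using pmf_\<mu>0_ge[OF a] S3 by (simp add: divide_right_mono)
  also have "\<theta> / real S = dm" using S3 unfolding \<theta>_def by simp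
  finally show ?thesis .
qed

lemma class_MM: "(\<mu>, MM \<sigma>) \<in> class_dm S A H dm"
  unfolding class_dm_def using valid_MM valid_\<mu> occupancy_MM by auto

end

fun Rr :: "(nat \<Rightarrow> real) \<Rightarrow> nat \<Rightarrow> nat \<Rightarrow> real" where
  "Rr Q t 0 = 0"
| "Rr Q t (Suc k) = 1 + (1 - Q t) * Rr Q (Suc t) k"

lemma Rr_nonneg: "(\<And>t. Q t \<le> 1) \<Longrightarrow> Rr Q t k \<ge> 0"
  by (induction k arbitrary: t) auto

lemma Rr_mono:
  assumes "\<And>t. Q1 t \<le> Q2 t" "\<And>t. Q2 t \<le> 1"
  shows "Rr Q2 t k \<le> Rr Q1 t k"
proof (induction k arbitrary: t)
  case 0 then show ?case by simp
next
  case (Suc k)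
  have a: "0 \<le> Rr Q2 (Suc t) k" by (rule Rr_nonneg) (use assms in auto)
  have b: "0 \<le> Rr Q1 (Suc t) k" by (rule Rr_nonneg) (meson assms order_trans)
  have "(1 - Q2 t) * Rr Q2 (Suc t) k \<le> (1 - Q1 t) * Rr Q2 (Suc t) k"
    using assms(1)[of t] a by (intro mult_right_mono) auto
  also have "\<dots> \<le> (1 - Q1 t) * Rr Q1 (Suc t) k"
    using assms[of t] Suc.IH[of "Suc t"] by (intro mult_left_mono) auto
  finally show ?case by simp
qed

lemma Rr_const: "Rr (\<lambda>_. 1 - b) t k = (\<Sum>j<k. b ^ j)"
proof (induction k arbitrary: t)
  case 0 then show ?case by simp
next
  case (Suc k)
  have "Rr (\<lambda>_. 1 - b) t (Suc k) = 1 + b * (\<Sum>j<k. b ^ j)" using Suc.IH by simp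
  also have "\<dots> = (\<Sum>j<Suc k. b ^ j)" by (simp add: sum.lessThan_Suc_shift sum_distrib_left del: sum.lessThan_Suc)
  finally show ?case .
qed

lemma sum_ge_2:
  fixes x y z :: real
  assumes "z\<^sup>2 \<le> x * y" "0 \<le> x" "0 \<le> y" "0 \<le> z"
  shows "2 * z \<le> x + y"
proof -
  have e: "(x + y)\<^sup>2 = 4 * (x * y) + (x - y)\<^sup>2" by (simp add: power2_eq_square algebra_simps)
  have e2: "(2 * z)\<^sup>2 = 4 * z\<^sup>2" by (simp add: power2_eq_square)
  have "(2 * z)\<^sup>2 \<le> (x + y)\<^sup>2" unfolding e e2 using assms(1) zero_le_power2[of "x - y"] by linarith
  then show ?thesis by (rule power2_le_imp_le) (use assms in auto)
qed

lemma Rr_prod: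
  assumes "\<And>t. 0 \<le> 1 - Q1 t" "\<And>t. 0 \<le> 1 - Q2 t" "\<And>t. b\<^sup>2 \<le> (1 - Q1 t) * (1 - Q2 t)" "0 \<le> b"
  shows "(Rr (\<lambda>_. 1 - b) t k)\<^sup>2 \<le> Rr Q1 t k * Rr Q2 t k"
proof (induction k arbitrary: t)
  case 0 then show ?case by simp
next
  case (Suc k)
  define x where "x = Rr Q1 (Suc t) k"
  define y where "y = Rr Q2 (Suc t) k"
  define z where "z = Rr (\<lambda>_. 1 - b) (Suc t) k"
  define p where "p = 1 - Q1 t"
  define q where "q = 1 - Q2 t"
  have x0: "0 \<le> x" unfolding x_def by (rule Rr_nonneg) (use assms(1) in \<open>auto simp: algebra_simps\<close>)
  have y0: "0 \<le> y" unfolding y_def by (rule Rr_nonneg) (use assms(2) in \<open>auto simp: algebra_simps\<close>)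
  have z0: "0 \<le> z" unfolding z_def by (rule Rr_nonneg) (use assms(4) in auto)
  have p0: "0 \<le> p" and q0: "0 \<le> q" using assms unfolding p_def q_def by auto
  have pq: "b\<^sup>2 \<le> p * q" using assms(3) unfolding p_def q_def by auto
  have ih: "z\<^sup>2 \<le> x * y" unfolding x_def y_def z_def by (rule Suc.IH)
  have prod: "(b * z)\<^sup>2 \<le> (p * x) * (q * y)"
  proof -
    have "(b * z)\<^sup>2 = b\<^sup>2 * z\<^sup>2" by (simp add: power_mult_distrib)
    also have "\<dots> \<le> (p * q) * (x * y)" using pq ih p0 q0 by (intro mult_mono) auto
    finally show ?thesis by (simp add: mult_ac)
  qed
  have amgm: "2 * (b * z) \<le> p * x + q * y"
    using prod p0 q0 x0 y0 z0 assms(4) by (intro sum_ge_2) auto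
  have "(Rr (\<lambda>_. 1 - b) t (Suc k))\<^sup>2 = (1 + b * z)\<^sup>2" unfolding z_def by simp
  also have "\<dots> = 1 + 2 * (b * z) + (b * z)\<^sup>2" by (simp add: power2_eq_square algebra_simps)
  also have "\<dots> \<le> 1 + (p * x + q * y) + (p * x) * (q * y)" using amgm prod by linarith
  also have "\<dots> = (1 + p * x) * (1 + q * y)" by (simp add: algebra_simps)
  also have "\<dots> = Rr Q1 t (Suc k) * Rr Q2 t (Suc k)" unfolding x_def y_def p_def q_def by simp
  finally show ?case .
qed



lemma exp_affine:
  fixes g :: "nat \<Rightarrow> real"
  assumes "\<And>a. 0 \<le> g a" "\<And>a. g a \<le> 1"
  shows "measure_pmf.expectation p (\<lambda>a. c + g a * d) = c + measure_pmf.expectation p g * d"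
proof -
  have ig: "integrable (measure_pmf p) g" by (rule integrable_pmf_bdd[where B=1]) (use assms in auto)
  then show ?thesis by simp
qed

context inst
begin

definition Qf :: "nat set \<Rightarrow> policy \<Rightarrow> nat \<Rightarrow> nat \<Rightarrow> real" where
  "Qf \<sigma> \<pi> s t = measure_pmf.expectation (\<pi> t s) (qa \<sigma> s)"

lemma Qf_bounds: "0 \<le> Qf \<sigma> \<pi> s t" "Qf \<sigma> \<pi> s t \<le> 1"
proof -
  have ig: "integrable (measure_pmf (\<pi> t s)) (qa \<sigma> s)"
    by (rule integrable_pmf_bdd[where B=1]) (use qa_bounds in auto)
  show "0 \<le> Qf \<sigma> \<pi> s t" unfolding Qf_def using qa_bounds by (intro integral_nonneg_AE) auto
  have "Qf \<sigma> \<pi> s t \<le> measure_pmf.expectation (\<pi> t s) (\<lambda>_. 1)"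
    unfolding Qf_def using ig qa_bounds by (intro integral_mono) auto
  then show "Qf \<sigma> \<pi> s t \<le> 1" by simp
qed

lemma exp_trM: "measure_pmf.expectation (trM \<sigma> s a) f = qa \<sigma> s a * f (partner s) + (1 - qa \<sigma> s a) * f s"
  unfolding trM_def by (rule integral_flip) (use qa_bounds in auto)

lemma MM_simps[simp]: "trans (MM \<sigma>) = trM \<sigma>" "rew (MM \<sigma>) = rewM" "init (MM \<sigma>) = \<nu>"
  by (auto simp: MM_def)

lemma V_dummy: "2 * m \<le> s \<Longrightarrow> Vf (MM \<sigma>) \<pi> t s k = 0"
proof (induction k arbitrary: t)
  case 0 then show ?case by simp
next
  case (Suc k)
  have p: "partner s = s" using Suc.prems unfolding partner_def by simp
  have r: "rewM t s a = 0" for a using Suc.prems unfolding rewM_def by simp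
  show ?case unfolding Vf_Suc[OF rb_MM] by (simp add: exp_trM p r Suc.IH[OF Suc.prems])
qed

lemma partner_even: "s < 2 * m \<Longrightarrow> even s \<Longrightarrow> partner s = s + 1"
  unfolding partner_def by simp

lemma partner_odd: "s < 2 * m \<Longrightarrow> odd s \<Longrightarrow> partner s = s - 1"
  unfolding partner_def by simp

lemma V_x:
  assumes "s < 2 * m" "even s"
  shows "Vf (MM \<sigma>) \<pi> t s (Suc k) = Qf \<sigma> \<pi> s t * Vf (MM \<sigma>) \<pi> (Suc t) (s + 1) k
                                      + (1 - Qf \<sigma> \<pi> s t) * Vf (MM \<sigma>) \<pi> (Suc t) s k"
proof -
  have r: "rewM t s a = 0" for a using assms unfolding rewM_def by simp
  define Vy where "Vy = Vf (MM \<sigma>) \<pi> (Suc t) (s + 1) k"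
  define Vx where "Vx = Vf (MM \<sigma>) \<pi> (Suc t) s k"
  have "Vf (MM \<sigma>) \<pi> t s (Suc k) = measure_pmf.expectation (\<pi> t s) (\<lambda>a. Vx + qa \<sigma> s a * (Vy - Vx))"
    unfolding Vf_Suc[OF rb_MM] by (simp add: exp_trM r partner_even[OF assms] Vx_def Vy_def algebra_simps)
  also have "\<dots> = Vx + Qf \<sigma> \<pi> s t * (Vy - Vx)"
    unfolding Qf_def by (rule exp_affine) (use qa_bounds in auto)
  finally show ?thesis unfolding Vx_def Vy_def by (simp add: algebra_simps)
qed

lemma V_x_le:
  assumes "s < 2 * m" "even s"
  shows "Vf (MM \<sigma>) \<pi> t s k \<le> real k - Rr (Qf \<sigma> \<pi> s) t k"
proof (induction k arbitrary: t)
  case 0 then show ?case by simp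
next
  case (Suc k)
  define Q where "Q = Qf \<sigma> \<pi> s t"
  have Q: "0 \<le> Q" "Q \<le> 1" unfolding Q_def using Qf_bounds by auto
  have y: "Vf (MM \<sigma>) \<pi> (Suc t) (s + 1) k \<le> real k" using Vf_bound[OF rb_MM] by blast
  have "Vf (MM \<sigma>) \<pi> t s (Suc k) = Q * Vf (MM \<sigma>) \<pi> (Suc t) (s + 1) k + (1 - Q) * Vf (MM \<sigma>) \<pi> (Suc t) s k"
    unfolding Q_def by (rule V_x[OF assms])
  also have "\<dots> \<le> Q * real k + (1 - Q) * (real k - Rr (Qf \<sigma> \<pi> s) (Suc t) k)"
    using Q y Suc.IH[of "Suc t"] by (intro add_mono mult_left_mono) auto
  also have "\<dots> = real (Suc k) - Rr (Qf \<sigma> \<pi> s) t (Suc k)" unfolding Q_def by (simp add: algebra_simps)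
  finally show ?case .
qed

lemma V_star_y:
  assumes "s < 2 * m" "odd s"
  shows "Vf (MM \<sigma>) (pistar \<sigma>) t s k = real k"
proof (induction k arbitrary: t)
  case 0 then show ?case by simp
next
  case (Suc k)
  have r: "rewM t s a = 1" for a using assms unfolding rewM_def by simp
  have q: "qa \<sigma> s 0 = 0" unfolding qa_def qq_def by simp
  have p: "pistar \<sigma> t s = return_pmf 0" unfolding pistar_def using assms by simp
  show ?case unfolding Vf_Suc[OF rb_MM] p by (simp add: exp_trM r q Suc.IH)
qed

lemma Qf_star: "s < 2 * m \<Longrightarrow> even s \<Longrightarrow> Qf \<sigma> (pistar \<sigma>) s t = q0 + \<delta>"
  unfolding Qf_def pistar_def qa_def qq_def by simp

lemma V_star_x:
  assumes "s < 2 * m" "even s"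
  shows "Vf (MM \<sigma>) (pistar \<sigma>) t s k = real k - Rr (\<lambda>_. q0 + \<delta>) t k"
proof (induction k arbitrary: t)
  case 0 then show ?case by simp
next
  case (Suc k)
  have o: "s + 1 < 2 * m" "odd (s + 1)" using assms by (simp_all, presburger)
  show ?case unfolding V_x[OF assms] Qf_star[OF assms] V_star_y[OF o] Suc.IH
    by (simp add: algebra_simps)
qed

end

lemma pow_diff_ge:
  fixes b g :: real
  assumes "0 \<le> g" "g \<le> b"
  shows "b ^ Suc j - g ^ Suc j \<ge> real (Suc j) * g ^ j * (b - g)"
proof (induction j)
  case 0 then show ?case by simp
next
  case (Suc j)
  have "b ^ Suc (Suc j) - g ^ Suc (Suc j) = b * (b ^ Suc j - g ^ Suc j) + g ^ Suc j * (b - g)"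
    by (simp add: algebra_simps)
  also have "\<dots> \<ge> g * (real (Suc j) * g ^ j * (b - g)) + g ^ Suc j * (b - g)"
  proof -
    have "g * (real (Suc j) * g ^ j * (b - g)) \<le> g * (b ^ Suc j - g ^ Suc j)"
      using Suc.IH assms by (intro mult_left_mono) auto
    also have "\<dots> \<le> b * (b ^ Suc j - g ^ Suc j)"
    proof -
      have "g ^ Suc j \<le> b ^ Suc j" using assms by (intro power_mono) auto
      then show ?thesis using assms by (intro mult_right_mono) auto
    qed
    finally show ?thesis by simp
  qed
  also have "g * (real (Suc j) * g ^ j * (b - g)) + g ^ Suc j * (b - g) = real (Suc (Suc j)) * g ^ Suc j * (b - g)"
    by (simp add: algebra_simps)
  finally show ?case .
qed

lemma gauss_real: "(\<Sum>j<n. real j) = real n * (real n - 1) / 2"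
  by (induction n) (auto simp: algebra_simps)


context inst
begin

lemma Qf_le: "Qf \<sigma> \<pi> s t \<le> q0 + \<delta>"
proof -
  have ig: "integrable (measure_pmf (\<pi> t s)) (qa \<sigma> s)"
    by (rule integrable_pmf_bdd[where B=1]) (use qa_bounds in auto)
  have qa_le: "qa \<sigma> s a \<le> q0 + \<delta>" for a
    unfolding qa_def using qq_bounds q0_pos \<delta>_pos by auto
  have "Qf \<sigma> \<pi> s t \<le> measure_pmf.expectation (\<pi> t s) (\<lambda>_. q0 + \<delta>)"
    unfolding Qf_def using ig qa_le by (intro integral_mono) auto
  then show ?thesis by simp
qed

lemma pol_value_sum: "pol_value (MM \<sigma>) H \<pi> = (\<Sum>s<S. Vf (MM \<sigma>) \<pi> 1 s H) / real S"
proof -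
  have "0 \<in> {..<S}" using S3 by auto
  then have ne: "{..<S} \<noteq> {}" by blast
  show ?thesis unfolding pol_value_Vf[OF rb_MM] MM_simps \<nu>_def
    using ne by (simp add: integral_pmf_of_set)
qed

lemma gap:
  "pol_value (MM \<sigma>) H (pistar \<sigma>) - pol_value (MM \<sigma>) H \<pi>
     \<ge> (\<Sum>i<m. Rr (Qf \<sigma> \<pi> (2 * i)) 1 H - Rr (\<lambda>_. q0 + \<delta>) 1 H) / real S"
proof -
  define D where "D s = Vf (MM \<sigma>) (pistar \<sigma>) 1 s H - Vf (MM \<sigma>) \<pi> 1 s H" for s
  have Rm: "Rr (\<lambda>_. q0 + \<delta>) t k \<le> Rr (Qf \<sigma> \<pi> s) t k" for s t k
    by (rule Rr_mono) (use Qf_le q0_le \<delta>_q0 in auto)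
  have Dx: "D s \<ge> Rr (Qf \<sigma> \<pi> s) 1 H - Rr (\<lambda>_. q0 + \<delta>) 1 H" if "s < 2 * m" "even s" for s
    unfolding D_def V_star_x[OF that] using V_x_le[OF that, of \<sigma> \<pi> 1 H] by linarith
  have D0: "D s \<ge> 0" for s
  proof (cases "s < 2 * m")
    case True
    show ?thesis
    proof (cases "even s")
      case True
      then show ?thesis using Dx[OF \<open>s < 2 * m\<close> True] Rm[of 1 H s] by linarith
    next
      case False
      then show ?thesis unfolding D_def V_star_y[OF \<open>s < 2 * m\<close> False]
        using Vf_bound[OF rb_MM, of \<sigma> \<pi> 1 s H] by linarith
    qed
  next
    case False
    then show ?thesis unfolding D_def using V_dummy[of s] by simp
  qed
  have "pol_value (MM \<sigma>) H (pistar \<sigma>) - pol_value (MM \<sigma>) H \<pi> = (\<Sum>s<S. D s) / real S"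
    unfolding pol_value_sum D_def by (simp add: sum_subtractf diff_divide_distrib)
  moreover have "(\<Sum>s<S. D s) \<ge> (\<Sum>i<m. Rr (Qf \<sigma> \<pi> (2 * i)) 1 H - Rr (\<lambda>_. q0 + \<delta>) 1 H)"
  proof -
    have "(\<Sum>i<m. Rr (Qf \<sigma> \<pi> (2 * i)) 1 H - Rr (\<lambda>_. q0 + \<delta>) 1 H) \<le> (\<Sum>i<m. D (2 * i))"
      using Dx by (intro sum_mono) auto
    also have "\<dots> = (\<Sum>s\<in>(\<lambda>i. 2 * i) ` {..<m}. D s)"
      by (subst sum.reindex) (auto simp: inj_on_def)
    also have "\<dots> \<le> (\<Sum>s<S. D s)"
      using m_ge(3) D0 by (intro sum_mono2) auto
    finally show ?thesis .
  qed
  ultimately show ?thesis using S3 by (simp add: divide_right_mono)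
qed

definition Lb :: "nat \<Rightarrow> bool \<Rightarrow> policy \<Rightarrow> real" where
  "Lb i b \<pi> = Rr (\<lambda>t. measure_pmf.expectation (\<pi> t (2 * i)) (qq b)) 1 H - Rr (\<lambda>_. q0 + \<delta>) 1 H"

lemma Qf_Lb: "i < m \<Longrightarrow> Qf \<sigma> \<pi> (2 * i) = (\<lambda>t. measure_pmf.expectation (\<pi> t (2 * i)) (qq (i \<in> \<sigma>)))"
  unfolding Qf_def qa_def by (auto simp: fun_eq_iff)

lemma gap_Lb:
  "pol_value (MM \<sigma>) H (pistar \<sigma>) - pol_value (MM \<sigma>) H \<pi> \<ge> (\<Sum>i<m. Lb i (i \<in> \<sigma>) \<pi>) / real S"
  using gap[of \<sigma> \<pi>] unfolding Lb_def by (simp add: Qf_Lb)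

lemma Lb_nonneg: "Lb i b \<pi> \<ge> 0"
proof -
  define Q where "Q t = measure_pmf.expectation (\<pi> t (2 * i)) (qq b)" for t
  have ig: "integrable (measure_pmf (\<pi> t (2 * i))) (qq b)" for t
    by (rule integrable_pmf_bdd[where B=1]) (use qq_bounds in auto)
  have "Q t \<le> measure_pmf.expectation (\<pi> t (2 * i)) (\<lambda>_. q0 + \<delta>)" for t
    unfolding Q_def using ig qq_bounds by (intro integral_mono) auto
  then have "Q t \<le> q0 + \<delta>" for t by simp
  then have "Rr (\<lambda>_. q0 + \<delta>) 1 H \<le> Rr Q 1 H"
    by (intro Rr_mono) (use q0_le \<delta>_q0 in auto)
  then show ?thesis unfolding Lb_def Q_def by simp
qed

lemma exp_qq: "measure_pmf.expectation p (qq b) = qq b 1 * pmf p 1 + qq b 2 * pmf p 2"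
proof -
  have "measure_pmf.expectation p (qq b) = (\<Sum>a\<in>{1,2}. qq b a * pmf p a)"
    by (rule integral_measure_pmf_real) (auto simp: qq_def split: if_splits)
  then show ?thesis by simp
qed

lemma prod_bound:
  "(1 - q0 - \<delta> / 2)\<^sup>2 \<le> (1 - measure_pmf.expectation p (qq True)) * (1 - measure_pmf.expectation p (qq False))"
  "0 \<le> 1 - measure_pmf.expectation p (qq b)"
proof -
  define \<alpha> where "\<alpha> = pmf p 1"
  define \<beta> where "\<beta> = pmf p 2"
  have ab: "\<alpha> + \<beta> \<le> 1"
  proof -
    have "\<alpha> + \<beta> = measure_pmf.prob p {1, 2}" unfolding \<alpha>_def \<beta>_def
      by (simp add: measure_measure_pmf_finite)
    then show ?thesis by simp
  qed
  have a0: "0 \<le> \<alpha>" and b0: "0 \<le> \<beta>" unfolding \<alpha>_def \<beta>_def by auto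
  have eT: "measure_pmf.expectation p (qq True) = (q0 + \<delta>) * \<alpha> + (q0 - \<delta>) * \<beta>"
    unfolding exp_qq \<alpha>_def \<beta>_def qq_def by simp
  have eF: "measure_pmf.expectation p (qq False) = (q0 - \<delta>) * \<alpha> + (q0 + \<delta>) * \<beta>"
    unfolding exp_qq \<alpha>_def \<beta>_def qq_def by simp
  define u where "u = 1 - q0 * (\<alpha> + \<beta>)"
  define d where "d = \<delta> * (\<alpha> - \<beta>)"
  have u: "1 - q0 \<le> u" unfolding u_def using ab q0_pos by (simp add: mult_left_le)
  have uq: "0 \<le> 1 - q0" using q0_le by simp
  have d: "d\<^sup>2 \<le> \<delta>\<^sup>2"
  proof -
    have "\<bar>\<alpha> - \<beta>\<bar> \<le> 1" using ab a0 b0 by auto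
    then have "\<bar>d\<bar> \<le> \<delta>" unfolding d_def using \<delta>_pos by (simp add: abs_mult mult_left_le)
    then show ?thesis by (metis abs_ge_zero power2_abs power_mono)
  qed
  have "(1 - q0 - \<delta> / 2)\<^sup>2 \<le> (1 - q0)\<^sup>2 - \<delta>\<^sup>2"
  proof -
    have "(1 - q0 - \<delta> / 2)\<^sup>2 = (1 - q0)\<^sup>2 - \<delta> * (1 - q0) + \<delta>\<^sup>2 / 4"
      by (simp add: power2_eq_square algebra_simps)
    moreover have "\<delta> * (5 / 4 * \<delta>) \<le> \<delta> * (1 - q0)"
      using \<delta>_pos \<delta>_q0 q0_le by (intro mult_left_mono) auto
    ultimately show ?thesis by (simp add: power2_eq_square algebra_simps)
  qed
  also have "\<dots> \<le> u\<^sup>2 - d\<^sup>2" using u uq d power_mono[OF u uq, of 2] by linarith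
  also have "u\<^sup>2 - d\<^sup>2 = (1 - measure_pmf.expectation p (qq True)) * (1 - measure_pmf.expectation p (qq False))"
    unfolding eT eF u_def d_def by (simp add: power2_eq_square algebra_simps)
  finally show "(1 - q0 - \<delta> / 2)\<^sup>2 \<le> (1 - measure_pmf.expectation p (qq True)) * (1 - measure_pmf.expectation p (qq False))" .
  have ig: "integrable (measure_pmf p) (qq b)"
    by (rule integrable_pmf_bdd[where B=1]) (use qq_bounds in auto)
  have "measure_pmf.expectation p (qq b) \<le> measure_pmf.expectation p (\<lambda>_. 1)"
    using ig qq_bounds by (intro integral_mono) auto
  then show "0 \<le> 1 - measure_pmf.expectation p (qq b)" by simp
qed

definition \<kappa> :: real where "\<kappa> = \<delta> * real H * (real H - 1) / 4"

lemma Lb_sum: "Lb i True \<pi> + Lb i False \<pi> \<ge> \<kappa>"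
proof -
  define Q1 where "Q1 t = measure_pmf.expectation (\<pi> t (2 * i)) (qq True)" for t
  define Q2 where "Q2 t = measure_pmf.expectation (\<pi> t (2 * i)) (qq False)" for t
  define b where "b = 1 - q0 - \<delta> / 2"
  define g where "g = 1 - q0 - \<delta>"
  have b0: "0 \<le> b" unfolding b_def using q0_le \<delta>_q0 by auto
  have g0: "0 \<le> g" unfolding g_def using q0_le \<delta>_q0 by auto
  have pr: "(Rr (\<lambda>_. 1 - b) 1 H)\<^sup>2 \<le> Rr Q1 1 H * Rr Q2 1 H"
    by (rule Rr_prod) (use prod_bound b0 in \<open>auto simp: Q1_def Q2_def b_def\<close>)
  have n1: "0 \<le> Rr Q1 1 H" by (rule Rr_nonneg) (use prod_bound in \<open>auto simp: Q1_def\<close>)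
  have n2: "0 \<le> Rr Q2 1 H" by (rule Rr_nonneg) (use prod_bound in \<open>auto simp: Q2_def\<close>)
  have nb: "0 \<le> Rr (\<lambda>_. 1 - b) 1 H" by (rule Rr_nonneg) (use b0 in auto)
  have s2: "2 * Rr (\<lambda>_. 1 - b) 1 H \<le> Rr Q1 1 H + Rr Q2 1 H"
    by (rule sum_ge_2[OF pr n1 n2 nb])
  have eg: "Rr (\<lambda>_. q0 + \<delta>) 1 H = (\<Sum>j<H. g ^ j)"
  proof -
    have "(\<lambda>_::nat. q0 + \<delta>) = (\<lambda>_. 1 - g)" unfolding g_def by auto
    then show ?thesis by (simp add: Rr_const)
  qed
  have eb: "Rr (\<lambda>_. 1 - b) 1 H = (\<Sum>j<H. b ^ j)" by (rule Rr_const)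
  have tm: "b ^ j - g ^ j \<ge> real j * (\<delta> / 4)" if "j < H" for j
  proof (cases j)
    case 0 then show ?thesis by simp
  next
    case (Suc j')
    have gb: "g \<le> b" unfolding g_def b_def using \<delta>_pos by simp
    have "b ^ Suc j' - g ^ Suc j' \<ge> real (Suc j') * g ^ j' * (b - g)"
      by (rule pow_diff_ge[OF g0 gb])
    moreover have "g ^ j' \<ge> 1 / 2"
    proof -
      have x: "-1 \<le> -(q0 + \<delta>)" using q0_le \<delta>_q0 by auto
      have "1 + real j' * (-(q0 + \<delta>)) \<le> (1 + (-(q0 + \<delta>))) ^ j'"
        by (rule Bernoulli_inequality[OF x])
      moreover have "real j' * (q0 + \<delta>) \<le> 1 / 2"
      proof -
        have "real j' \<le> real H" using that Suc by simp
        moreover have "q0 + \<delta> \<le> 3 / (8 * real H)" using \<delta>_q0 unfolding q0_def by (simp add: field_simps)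
        ultimately have "real j' * (q0 + \<delta>) \<le> real H * (3 / (8 * real H))"
          using q0_pos \<delta>_pos by (intro mult_mono) auto
        also have "\<dots> \<le> 1 / 2" using H2 by (simp add: field_simps)
        finally show ?thesis .
      qed
      ultimately show ?thesis unfolding g_def by (simp add: algebra_simps)
    qed
    moreover have "b - g = \<delta> / 2" unfolding b_def g_def by simp
    ultimately have A: "b ^ Suc j' - g ^ Suc j' \<ge> real (Suc j') * g ^ j' * (\<delta> / 2)"
      and B: "1 / 2 \<le> g ^ j'" by auto
    have "real (Suc j') * (1 / 2) * (\<delta> / 2) \<le> real (Suc j') * g ^ j' * (\<delta> / 2)"
      using B \<delta>_pos by (intro mult_right_mono mult_left_mono) auto
    then have "b ^ Suc j' - g ^ Suc j' \<ge> real (Suc j') * (1 / 2) * (\<delta> / 2)" using A by linarith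
    then show ?thesis using Suc by simp
  qed
  have "(\<Sum>j<H. b ^ j) - (\<Sum>j<H. g ^ j) \<ge> (\<Sum>j<H. real j * (\<delta> / 4))"
    unfolding sum_subtractf[symmetric] using tm by (intro sum_mono) auto
  also have "(\<Sum>j<H. real j * (\<delta> / 4)) = \<kappa> / 2"
    unfolding sum_distrib_right[symmetric] gauss_real \<kappa>_def by simp
  finally have "\<kappa> / 2 \<le> (\<Sum>j<H. b ^ j) - (\<Sum>j<H. g ^ j)" .
  then show ?thesis unfolding Lb_def Q1_def[symmetric] Q2_def[symmetric] using s2 eg eb by linarith
qed

end

lemma finite_traj:
  assumes "\<And>t s. finite (set_pmf (\<pi> t s))" "\<And>s a. finite (set_pmf (trans M s a))"
  shows "finite (set_pmf (traj M \<pi> t s k))"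
proof (induction k arbitrary: t s)
  case 0 then show ?case by simp
next
  case (Suc k)
  show ?case unfolding traj.simps
    by (intro finite_set_bind assms) (auto intro: Suc.IH)
qed

lemma BC_map:
  assumes "finite (set_pmf X)" "finite (set_pmf Y)"
  shows "BC (map_pmf f X) (map_pmf f Y) \<ge> BC X Y"
proof -
  have "BC (map_pmf f X) (map_pmf f Y) \<ge> (\<Sum>r\<in>set_pmf X. sqrt (pmf X r * pmf Y r) * BC (return_pmf (f r)) (return_pmf (f r)))"
    unfolding map_pmf_def using assms by (intro BC_bind finite_set_bind) auto
  also have "(\<Sum>r\<in>set_pmf X. sqrt (pmf X r * pmf Y r) * BC (return_pmf (f r)) (return_pmf (f r))) = BC X Y"
    using assms by (simp add: BC_return BC_alt)
  finally show ?thesis .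
qed

lemma sqrt_diff_sq:
  fixes a d :: real
  assumes "0 < a" "0 \<le> d" "d \<le> a"
  shows "sqrt (a\<^sup>2 - d\<^sup>2) \<ge> a - d\<^sup>2 / a"
proof -
  have d2: "d\<^sup>2 \<le> a\<^sup>2" using assms by (intro power_mono) auto
  have nn: "0 \<le> a - d\<^sup>2 / a"
  proof -
    have "d\<^sup>2 / a \<le> a\<^sup>2 / a" using d2 assms by (intro divide_right_mono) auto
    then show ?thesis using assms by (simp add: power2_eq_square)
  qed
  have "(a - d\<^sup>2 / a)\<^sup>2 = a\<^sup>2 - 2 * d\<^sup>2 + (d\<^sup>2)\<^sup>2 / a\<^sup>2"
    using assms by (simp add: power2_eq_square field_simps)
  also have "(d\<^sup>2)\<^sup>2 / a\<^sup>2 \<le> d\<^sup>2"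
  proof -
    have "(d\<^sup>2)\<^sup>2 \<le> d\<^sup>2 * a\<^sup>2" using d2 by (simp add: power2_eq_square mult_left_mono)
    then show ?thesis using assms by (simp add: divide_le_eq)
  qed
  finally have "(a - d\<^sup>2 / a)\<^sup>2 \<le> a\<^sup>2 - d\<^sup>2" by simp
  then show ?thesis using nn by (simp add: real_le_rsqrt)
qed

context inst
begin

definition hh :: real where "hh = 2 * \<delta>\<^sup>2 / q0"

lemma BC_flip:
  assumes "{p1, p2} = {q0 + \<delta>, q0 - \<delta>}" "u \<noteq> v"
  shows "BC (flip_pmf u v p1) (flip_pmf u v p2) \<ge> 1 - hh"
proof -
  have q: "0 < q0 - \<delta>" "q0 + \<delta> < 1" using q0_pos q0_le \<delta>_q0 \<delta>_pos by auto
  have cs: "(p1 = q0 + \<delta> \<and> p2 = q0 - \<delta>) \<or> (p1 = q0 - \<delta> \<and> p2 = q0 + \<delta>)"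
    using assms(1) \<delta>_pos by (auto simp: doubleton_eq_iff)
  have p: "0 < p1" "p1 < 1" "0 < p2" "p2 < 1" using cs q \<delta>_pos by auto
  have "BC (flip_pmf u v p1) (flip_pmf u v p2) \<ge> (\<Sum>b\<in>set_pmf (bernoulli_pmf p1). sqrt (pmf (bernoulli_pmf p1) b * pmf (bernoulli_pmf p2) b) * BC (return_pmf (if b then u else v)) (return_pmf (if b then u else v)))"
    unfolding flip_pmf_def map_pmf_def by (intro BC_bind finite_set_bind) auto
  also have "(\<Sum>b\<in>set_pmf (bernoulli_pmf p1). sqrt (pmf (bernoulli_pmf p1) b * pmf (bernoulli_pmf p2) b) * BC (return_pmf (if b then u else v)) (return_pmf (if b then u else v)))
     = sqrt (p1 * p2) + sqrt ((1 - p1) * (1 - p2))"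
    using p by (simp add: BC_return UNIV_bool)
  also have "p1 * p2 = q0\<^sup>2 - \<delta>\<^sup>2"
  proof -
    have "p1 * p2 = (q0 + \<delta>) * (q0 - \<delta>)" using cs by (metis mult.commute)
    then show ?thesis by (simp add: power2_eq_square algebra_simps)
  qed
  also have "(1 - p1) * (1 - p2) = (1 - q0)\<^sup>2 - \<delta>\<^sup>2"
  proof -
    have "(1 - p1) * (1 - p2) = (1 - (q0 + \<delta>)) * (1 - (q0 - \<delta>))" using cs by (metis mult.commute)
    then show ?thesis by (simp add: power2_eq_square algebra_simps)
  qed
  also have "sqrt (q0\<^sup>2 - \<delta>\<^sup>2) + sqrt ((1 - q0)\<^sup>2 - \<delta>\<^sup>2) \<ge> (q0 - \<delta>\<^sup>2 / q0) + ((1 - q0) - \<delta>\<^sup>2 / (1 - q0))"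
    using q0_pos q0_le \<delta>_q0 \<delta>_pos by (intro add_mono sqrt_diff_sq) auto
  also have "\<delta>\<^sup>2 / (1 - q0) \<le> \<delta>\<^sup>2 / q0"
    using q0_pos q0_le by (intro divide_left_mono) auto
  then have "(q0 - \<delta>\<^sup>2 / q0) + ((1 - q0) - \<delta>\<^sup>2 / (1 - q0)) \<ge> 1 - hh"
    unfolding hh_def by simp
  finally show ?thesis .
qed

definition inP :: "nat \<Rightarrow> nat \<Rightarrow> bool" where
  "inP i s \<longleftrightarrow> s < 2 * m \<and> s div 2 = i"

lemma inP_partner: "inP i (partner s) = inP i s"
  unfolding inP_def using partner_div[of s] by (cases "s < 2 * m") (auto simp: partner_def)

lemma trM_same:
  assumes "\<not> (inP i s \<and> a \<in> {1, 2})"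
  shows "trM (\<sigma> \<union> {i}) s a = trM (\<sigma> - {i}) s a"
  using assms unfolding trM_def qa_def qq_def inP_def by auto

lemma trM_diff:
  assumes "inP i s" "a \<in> {1, 2}"
  shows "BC (trM (\<sigma> \<union> {i}) s a) (trM (\<sigma> - {i}) s a) \<ge> 1 - hh"
  unfolding trM_def
proof (rule BC_flip)
  show "partner s \<noteq> s" using assms partner_div[of s] unfolding inP_def by auto
  show "{qa (\<sigma> \<union> {i}) s a, qa (\<sigma> - {i}) s a} = {q0 + \<delta>, q0 - \<delta>}"
    using assms unfolding qa_def qq_def inP_def by auto
qed


lemma sum_\<mu>0: "(\<Sum>a\<in>set_pmf \<mu>0. pmf \<mu>0 a * (1 - y * (if a \<in> {1,2} then 1 else 0))) = 1 - 2 * \<theta> * y"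
proof -
  have e: "pmf \<mu>0 a * (1 - y * (if a \<in> {1,2} then 1 else 0)) = pmf \<mu>0 a - y * (if a \<in> {1,2} then pmf \<mu>0 a else 0)" for a
    by (simp add: algebra_simps)
  have s1: "(\<Sum>a\<in>set_pmf \<mu>0. pmf \<mu>0 a) = 1" using finite_\<mu>0 by (rule sum_pmf_eq_1) auto
  have "(\<Sum>a\<in>set_pmf \<mu>0. (if a \<in> {1,2} then pmf \<mu>0 a else 0)) = (\<Sum>a\<in>set_pmf \<mu>0 \<inter> {1,2}. pmf \<mu>0 a)"
    using finite_\<mu>0 by (simp add: sum.inter_restrict)
  also have "\<dots> = (\<Sum>a\<in>{1,2}. pmf \<mu>0 a)"
    by (rule sum.mono_neutral_left) (auto simp: set_pmf_iff)
  also have "\<dots> = 2 * \<theta>" by (simp add: pmf_\<mu>0)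
  finally have s2: "(\<Sum>a\<in>set_pmf \<mu>0. (if a \<in> {1,2} then pmf \<mu>0 a else 0)) = 2 * \<theta>" .
  show ?thesis unfolding e sum_subtractf sum_distrib_left[symmetric] s1 s2 by simp
qed

lemma finite_traj_MM: "finite (set_pmf (traj (MM \<sigma>) \<mu> t s k))"
  by (rule finite_traj) (auto simp: \<mu>_def finite_\<mu>0 finite_trM)

lemma hh_nonneg: "0 \<le> hh" unfolding hh_def using q0_pos by auto

lemma BC_traj:
  "BC (traj (MM (\<sigma> \<union> {i})) \<mu> t s k) (traj (MM (\<sigma> - {i})) \<mu> t s k)
     \<ge> 1 - 2 * real k * \<theta> * hh * (if inP i s then 1 else 0)"
proof (induction k arbitrary: t s)
  case 0
  then show ?case by (simp add: BC_return)
next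
  case (Suc k)
  define c :: real where "c = (if inP i s then 1 else 0)"
  define X where "X = 2 * real k * \<theta> * hh * c"
  have c0: "0 \<le> c" unfolding c_def by simp
  have X0: "0 \<le> X" unfolding X_def c_def using \<theta>_bounds hh_nonneg by simp
  define F1 where "F1 a s' = map_pmf (\<lambda>rest. (s, a, rewM t s a) # rest) (traj (MM (\<sigma> \<union> {i})) \<mu> (Suc t) s' k)" for a s'
  define F0 where "F0 a s' = map_pmf (\<lambda>rest. (s, a, rewM t s a) # rest) (traj (MM (\<sigma> - {i})) \<mu> (Suc t) s' k)" for a s'
  have fF1: "finite (set_pmf (F1 a s'))" for a s' unfolding F1_def using finite_traj_MM by simp
  have fF0: "finite (set_pmf (F0 a s'))" for a s' unfolding F0_def using finite_traj_MM by simp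
  have e1: "traj (MM (\<sigma> \<union> {i})) \<mu> t s (Suc k) = bind_pmf \<mu>0 (\<lambda>a. bind_pmf (trM (\<sigma> \<union> {i}) s a) (F1 a))"
    unfolding F1_def by (simp add: \<mu>_def)
  have e0: "traj (MM (\<sigma> - {i})) \<mu> t s (Suc k) = bind_pmf \<mu>0 (\<lambda>a. bind_pmf (trM (\<sigma> - {i}) s a) (F0 a))"
    unfolding F0_def by (simp add: \<mu>_def)
  show ?case
  proof (cases "1 - X \<ge> 0")
    case False
    have "1 - 2 * real (Suc k) * \<theta> * hh * c \<le> 0"
      using False \<theta>_bounds hh_nonneg c0 unfolding X_def by (simp add: algebra_simps) (smt (verit) mult_nonneg_nonneg)
    then show ?thesis using BC_nonneg unfolding c_def by (smt (verit))
  next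
    case True
    have inner: "BC (bind_pmf (trM (\<sigma> \<union> {i}) s a) (F1 a)) (bind_pmf (trM (\<sigma> - {i}) s a) (F0 a))
              \<ge> (1 - X) * (1 - hh * c * (if a \<in> {1,2} then 1 else 0))" for a
    proof -
      have "BC (bind_pmf (trM (\<sigma> \<union> {i}) s a) (F1 a)) (bind_pmf (trM (\<sigma> - {i}) s a) (F0 a))
         \<ge> (\<Sum>s'\<in>set_pmf (trM (\<sigma> \<union> {i}) s a). sqrt (pmf (trM (\<sigma> \<union> {i}) s a) s' * pmf (trM (\<sigma> - {i}) s a) s') * BC (F1 a s') (F0 a s'))"
        by (intro BC_bind finite_set_bind finite_trM fF1 fF0)
      also have "(\<Sum>s'\<in>set_pmf (trM (\<sigma> \<union> {i}) s a). sqrt (pmf (trM (\<sigma> \<union> {i}) s a) s' * pmf (trM (\<sigma> - {i}) s a) s') * BC (F1 a s') (F0 a s')) \<ge> (\<Sum>s'\<in>set_pmf (trM (\<sigma> \<union> {i}) s a). sqrt (pmf (trM (\<sigma> \<union> {i}) s a) s' * pmf (trM (\<sigma> - {i}) s a) s') * (1 - X))"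
      proof (intro sum_mono mult_left_mono)
        fix s' assume s': "s' \<in> set_pmf (trM (\<sigma> \<union> {i}) s a)"
        then have "inP i s' = inP i s" using set_trM[of "\<sigma> \<union> {i}" s a] inP_partner by auto
        then have "1 - X \<le> BC (traj (MM (\<sigma> \<union> {i})) \<mu> (Suc t) s' k) (traj (MM (\<sigma> - {i})) \<mu> (Suc t) s' k)"
          using Suc.IH[of s' "Suc t"] unfolding X_def c_def by simp
        also have "\<dots> \<le> BC (F1 a s') (F0 a s')" unfolding F1_def F0_def
          by (intro BC_map finite_traj_MM)
        finally show "1 - X \<le> BC (F1 a s') (F0 a s')" .
      qed auto
      also have "(\<Sum>s'\<in>set_pmf (trM (\<sigma> \<union> {i}) s a). sqrt (pmf (trM (\<sigma> \<union> {i}) s a) s' * pmf (trM (\<sigma> - {i}) s a) s') * (1 - X))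
           = (1 - X) * BC (trM (\<sigma> \<union> {i}) s a) (trM (\<sigma> - {i}) s a)"
        by (simp add: BC_alt finite_trM sum_distrib_left mult.commute)
      also have "(1 - X) * BC (trM (\<sigma> \<union> {i}) s a) (trM (\<sigma> - {i}) s a) \<ge> (1 - X) * (1 - hh * c * (if a \<in> {1,2} then 1 else 0))"
      proof (intro mult_left_mono True)
        show "1 - hh * c * (if a \<in> {1,2} then 1 else 0) \<le> BC (trM (\<sigma> \<union> {i}) s a) (trM (\<sigma> - {i}) s a)"
        proof (cases "inP i s \<and> a \<in> {1,2}")
          case True
          then show ?thesis using trM_diff[of i s a \<sigma>] unfolding c_def by simp
        next
          case False
          then show ?thesis using trM_same[OF False, of \<sigma>] BC_self[OF finite_trM] hh_nonneg c0
            by (simp add: zero_le_mult_iff)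
        qed
      qed
      finally show ?thesis .
    qed
    have "BC (traj (MM (\<sigma> \<union> {i})) \<mu> t s (Suc k)) (traj (MM (\<sigma> - {i})) \<mu> t s (Suc k))
       \<ge> (\<Sum>a\<in>set_pmf \<mu>0. sqrt (pmf \<mu>0 a * pmf \<mu>0 a) * BC (bind_pmf (trM (\<sigma> \<union> {i}) s a) (F1 a)) (bind_pmf (trM (\<sigma> - {i}) s a) (F0 a)))"
      unfolding e1 e0 using finite_traj_MM[of "\<sigma> \<union> {i}" t s "Suc k"] finite_traj_MM[of "\<sigma> - {i}" t s "Suc k"]
      unfolding e1 e0 by (intro BC_bind finite_\<mu>0) auto
    also have "(\<Sum>a\<in>set_pmf \<mu>0. sqrt (pmf \<mu>0 a * pmf \<mu>0 a) * BC (bind_pmf (trM (\<sigma> \<union> {i}) s a) (F1 a)) (bind_pmf (trM (\<sigma> - {i}) s a) (F0 a))) \<ge> (\<Sum>a\<in>set_pmf \<mu>0. pmf \<mu>0 a * ((1 - X) * (1 - hh * c * (if a \<in> {1,2} then 1 else 0))))"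
      using inner by (intro sum_mono) (simp add: mult_left_mono)
    also have "(\<Sum>a\<in>set_pmf \<mu>0. pmf \<mu>0 a * ((1 - X) * (1 - hh * c * (if a \<in> {1,2} then 1 else 0))))
        = (1 - X) * (1 - 2 * \<theta> * (hh * c))"
      using sum_\<mu>0[of "hh * c"] by (simp add: sum_distrib_left[symmetric] mult_ac)
    also have "(1 - X) * (1 - 2 * \<theta> * (hh * c)) \<ge> 1 - 2 * real (Suc k) * \<theta> * hh * c"
    proof -
      have "0 \<le> X * (2 * \<theta> * (hh * c))" using X0 \<theta>_bounds hh_nonneg c0 by simp
      then show ?thesis unfolding X_def by (simp add: algebra_simps)
    qed
    finally show ?thesis unfolding c_def .
  qed
qed


lemma finite_ep: "finite (set_pmf (episode_pmf (MM \<sigma>) \<mu> H))"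
proof -
  have "0 \<in> {..<S}" using S3 by auto
  then have ne: "{..<S} \<noteq> {}" by blast
  show ?thesis unfolding episode_pmf_def MM_simps \<nu>_def by (intro finite_set_bind finite_traj_MM) (use ne in auto)
qed

lemma card_inP: "i < m \<Longrightarrow> (\<Sum>s<S. (if inP i s then 1 else 0 :: real)) = 2"
proof -
  assume i: "i < m"
  have "{s. s < S \<and> inP i s} = {2 * i, 2 * i + 1}"
    using i m_ge(3) unfolding inP_def by auto
  then have "(\<Sum>s<S. (if inP i s then 1 else 0 :: real)) = real (card {2 * i, 2 * i + 1})"
    by (simp add: sum.If_cases Int_def)
  then show ?thesis by simp
qed

lemma BC_ep:
  assumes i: "i < m"
  shows "BC (episode_pmf (MM (\<sigma> \<union> {i})) \<mu> H) (episode_pmf (MM (\<sigma> - {i})) \<mu> H) \<ge> 1 - 4 * real H * dm * hh"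
proof -
  have "0 \<in> {..<S}" using S3 by auto
  then have ne: "{..<S} \<noteq> {}" by blast
  have sn: "set_pmf \<nu> = {..<S}" unfolding \<nu>_def using ne by simp
  have pn: "s < S \<Longrightarrow> pmf \<nu> s = 1 / real S" for s unfolding \<nu>_def using ne by simp
  have "BC (episode_pmf (MM (\<sigma> \<union> {i})) \<mu> H) (episode_pmf (MM (\<sigma> - {i})) \<mu> H)
     \<ge> (\<Sum>s\<in>set_pmf \<nu>. sqrt (pmf \<nu> s * pmf \<nu> s) * BC (traj (MM (\<sigma> \<union> {i})) \<mu> 1 s H) (traj (MM (\<sigma> - {i})) \<mu> 1 s H))"
    using finite_ep[of "\<sigma> \<union> {i}"] finite_ep[of "\<sigma> - {i}"]
    unfolding episode_pmf_def MM_simps by (intro BC_bind) (auto simp: sn)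
  also have "(\<Sum>s\<in>set_pmf \<nu>. sqrt (pmf \<nu> s * pmf \<nu> s) * BC (traj (MM (\<sigma> \<union> {i})) \<mu> 1 s H) (traj (MM (\<sigma> - {i})) \<mu> 1 s H))
     \<ge> (\<Sum>s<S. (1 / real S) * (1 - 2 * real H * \<theta> * hh * (if inP i s then 1 else 0)))"
    unfolding sn
  proof (intro sum_mono)
    fix s assume "s \<in> {..<S}"
    have "sqrt (pmf \<nu> s * pmf \<nu> s) = \<bar>pmf \<nu> s\<bar>" by simp
    also have "\<dots> = 1 / real S" using pn \<open>s \<in> {..<S}\<close> by simp
    finally have sq: "sqrt (pmf \<nu> s * pmf \<nu> s) = 1 / real S" .
    have b: "1 - 2 * real H * \<theta> * hh * (if inP i s then 1 else 0) \<le> BC (traj (MM (\<sigma> \<union> {i})) \<mu> 1 s H) (traj (MM (\<sigma> - {i})) \<mu> 1 s H)"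
      by (rule BC_traj)
    then show "(1 / real S) * (1 - 2 * real H * \<theta> * hh * (if inP i s then 1 else 0)) \<le> sqrt (pmf \<nu> s * pmf \<nu> s) * BC (traj (MM (\<sigma> \<union> {i})) \<mu> 1 s H) (traj (MM (\<sigma> - {i})) \<mu> 1 s H)"
      unfolding sq using b by (intro mult_left_mono) auto
  qed
  also have "(\<Sum>s<S. (1 / real S) * (1 - 2 * real H * \<theta> * hh * (if inP i s then 1 else 0)))
     = (1 / real S) * (real S - 2 * real H * \<theta> * hh * (\<Sum>s<S. (if inP i s then 1 else 0)))"
    by (simp only: sum_distrib_left[symmetric] sum_subtractf sum_distrib_left[of "2 * real H * \<theta> * hh", symmetric]) (simp add: mult_ac)
  also have "\<dots> = 1 - 4 * real H * dm * hh"
    unfolding card_inP[OF i] \<theta>_def using S3 by (simp add: field_simps)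
  finally show ?thesis .
qed

lemma ov_data:
  assumes i: "i < m" and n: "real n * (4 * real H * dm * hh) \<le> 1 / 2"
  shows "ov (data_pmf n (MM (\<sigma> \<union> {i})) \<mu> H) (data_pmf n (MM (\<sigma> - {i})) \<mu> H) \<ge> 1 / 8"
proof -
  define \<eta> where "\<eta> = 4 * real H * dm * hh"
  have \<eta>0: "0 \<le> \<eta>" unfolding \<eta>_def using dm_pos hh_nonneg by simp
  note P = BC_Pi[OF finite_ep[of "\<sigma> \<union> {i}"] finite_ep[of "\<sigma> - {i}"], of n "[]"]
  have bc: "BC (data_pmf n (MM (\<sigma> \<union> {i})) \<mu> H) (data_pmf n (MM (\<sigma> - {i})) \<mu> H) \<ge> 1 / 2"
  proof (cases "n = 0")
    case True
    then show ?thesis using P unfolding data_pmf_def by simp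
  next
    case False
    then have "\<eta> \<le> 1 / 2" using n \<eta>0 unfolding \<eta>_def[symmetric]
      by (metis dual_order.trans mult_le_cancel_right1 of_nat_0_less_iff of_nat_1 of_nat_le_iff less_one not_le)
    have "1 / 2 \<le> 1 + real n * (- \<eta>)" using n unfolding \<eta>_def by simp
    also have "\<dots> \<le> (1 + (- \<eta>)) ^ n" using \<open>\<eta> \<le> 1/2\<close> by (intro Bernoulli_inequality) auto
    also have "\<dots> \<le> (BC (episode_pmf (MM (\<sigma> \<union> {i})) \<mu> H) (episode_pmf (MM (\<sigma> - {i})) \<mu> H)) ^ n"
      using BC_ep[OF i, of \<sigma>] \<open>\<eta> \<le> 1/2\<close> unfolding \<eta>_def by (intro power_mono) auto
    also have "\<dots> \<le> BC (data_pmf n (MM (\<sigma> \<union> {i})) \<mu> H) (data_pmf n (MM (\<sigma> - {i})) \<mu> H)"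
      using P unfolding data_pmf_def by simp
    finally show ?thesis .
  qed
  have "ov (data_pmf n (MM (\<sigma> \<union> {i})) \<mu> H) (data_pmf n (MM (\<sigma> - {i})) \<mu> H)
     \<ge> (BC (data_pmf n (MM (\<sigma> \<union> {i})) \<mu> H) (data_pmf n (MM (\<sigma> - {i})) \<mu> H))\<^sup>2 / 2"
    using P unfolding data_pmf_def by (intro ov_BC) auto
  moreover have "(BC (data_pmf n (MM (\<sigma> \<union> {i})) \<mu> H) (data_pmf n (MM (\<sigma> - {i})) \<mu> H))\<^sup>2 \<ge> (1/2)\<^sup>2"
    using bc by (intro power_mono) auto
  ultimately show ?thesis by (simp add: power2_eq_square)
qed

end

lemma sum_Pow_split:
  fixes f :: "'a set \<Rightarrow> real"
  assumes "finite A" "i \<in> A"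
  shows "(\<Sum>\<sigma>\<in>Pow A. f \<sigma>) = (\<Sum>\<tau>\<in>Pow (A - {i}). f (insert i \<tau>) + f \<tau>)"
proof -
  have A: "A = insert i (A - {i})" using assms by auto
  have fin: "finite (Pow (A - {i}))" using assms by simp
  have disj: "Pow (A - {i}) \<inter> insert i ` Pow (A - {i}) = {}" by auto
  have inj: "inj_on (insert i) (Pow (A - {i}))" unfolding inj_on_def by blast
  have "(\<Sum>\<sigma>\<in>Pow A. f \<sigma>) = (\<Sum>\<sigma>\<in>Pow (A - {i}) \<union> insert i ` Pow (A - {i}). f \<sigma>)"
    by (subst A) (simp only: Pow_insert)
  also have "\<dots> = (\<Sum>\<sigma>\<in>Pow (A - {i}). f \<sigma>) + (\<Sum>\<sigma>\<in>insert i ` Pow (A - {i}). f \<sigma>)"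
    using fin disj by (intro sum.union_disjoint) auto
  also have "(\<Sum>\<sigma>\<in>insert i ` Pow (A - {i}). f \<sigma>) = (\<Sum>\<tau>\<in>Pow (A - {i}). f (insert i \<tau>))"
    using inj by (simp add: sum.reindex)
  finally show ?thesis by (simp add: sum.distrib)
qed

context inst
begin

lemma bdd_pol: "bdd_above ((\<lambda>\<pi>. pol_value (MM \<sigma>) H \<pi>) ` X)"
proof (rule bdd_aboveI)
  fix y assume "y \<in> (\<lambda>\<pi>. pol_value (MM \<sigma>) H \<pi>) ` X"
  then obtain \<pi> where "y = pol_value (MM \<sigma>) H \<pi>" by auto
  also have "\<dots> = (\<Sum>s<S. Vf (MM \<sigma>) \<pi> 1 s H) / real S" by (rule pol_value_sum)
  also have "\<dots> \<le> (\<Sum>s<S. real H) / real S"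
    using Vf_bound[OF rb_MM] S3 by (intro divide_right_mono sum_mono) auto
  finally show "y \<le> real H" using S3 by simp
qed

lemma opt_ge: "opt_value S A H (MM \<sigma>) \<ge> pol_value (MM \<sigma>) H (pistar \<sigma>)"
  unfolding opt_value_def by (rule cSUP_upper) (use valid_pistar bdd_pol in auto)

lemma assouad:
  assumes n: "real n * (4 * real H * dm * hh) \<le> 1 / 2"
    and eps: "\<epsilon> \<le> real m * \<kappa> / (64 * real S)"
  shows "\<exists>\<sigma>. measure_pmf.prob (bind_pmf (data_pmf n (MM \<sigma>) \<mu> H) alg)
            {\<pi>. opt_value S A H (MM \<sigma>) - pol_value (MM \<sigma>) H \<pi> \<ge> \<epsilon>} \<ge> 1 / 32"
proof -
  define Out where "Out \<sigma> = bind_pmf (data_pmf n (MM \<sigma>) \<mu> H) alg" for \<sigma>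
  define E where "E i b = {\<pi>. Lb i b \<pi> \<ge> \<kappa> / 2}" for i b
  define f where "f \<sigma> i = measure_pmf.prob (Out \<sigma>) (E i (i \<in> \<sigma>))" for \<sigma> i
  have EF: "\<pi> \<in> E i True \<or> \<pi> \<in> E i False" for i \<pi>
    using Lb_sum[of i \<pi>] unfolding E_def by auto
  have pairs: "measure_pmf.prob (Out (\<sigma> \<union> {i})) (E i True) + measure_pmf.prob (Out (\<sigma> - {i})) (E i False) \<ge> 1 / 8"
    if "i < m" for \<sigma> i
  proof -
    have "ov (data_pmf n (MM (\<sigma> \<union> {i})) \<mu> H) (data_pmf n (MM (\<sigma> - {i})) \<mu> H)
        \<le> measure_pmf.prob (Out (\<sigma> \<union> {i})) (E i True) + measure_pmf.prob (Out (\<sigma> - {i})) (E i False)"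
      unfolding Out_def using EF
      by (intro ov_alg) (use BC_Pi[OF finite_ep finite_ep] in \<open>auto simp: data_pmf_def\<close>)
    then show ?thesis using ov_data[OF that n, of \<sigma>] by linarith
  qed
  have per_i: "(\<Sum>\<sigma>\<in>Pow {..<m}. f \<sigma> i) \<ge> 2 ^ m / 16" if i: "i < m" for i
  proof -
    have "(\<Sum>\<sigma>\<in>Pow {..<m}. f \<sigma> i) = (\<Sum>\<tau>\<in>Pow ({..<m} - {i}). f (insert i \<tau>) i + f \<tau> i)"
      using i by (intro sum_Pow_split) auto
    also have "\<dots> \<ge> (\<Sum>\<tau>\<in>Pow ({..<m} - {i}). 1 / 8)"
    proof (intro sum_mono)
      fix \<tau> assume "\<tau> \<in> Pow ({..<m} - {i})"
      then have t: "i \<notin> \<tau>" "\<tau> - {i} = \<tau>" by auto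
      show "1 / 8 \<le> f (insert i \<tau>) i + f \<tau> i"
        using pairs[OF i, of \<tau>] t unfolding f_def by simp
    qed
    also have "(\<Sum>\<tau>\<in>Pow ({..<m} - {i}). (1::real) / 8) = 2 ^ (m - 1) / 8"
      using i by (simp add: card_Pow)
    also have "(2::real) ^ (m - 1) / 8 = 2 ^ m / 16"
      using m_ge(2) by (cases m) auto
    finally show ?thesis .
  qed
  have tot: "(\<Sum>\<sigma>\<in>Pow {..<m}. \<Sum>i<m. f \<sigma> i) \<ge> real m * 2 ^ m / 16"
  proof -
    have "(\<Sum>\<sigma>\<in>Pow {..<m}. \<Sum>i<m. f \<sigma> i) = (\<Sum>i<m. \<Sum>\<sigma>\<in>Pow {..<m}. f \<sigma> i)" by (rule sum.swap)
    also have "\<dots> \<ge> (\<Sum>i<m. (2::real) ^ m / 16)" by (intro sum_mono per_i) auto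
    finally show ?thesis by simp
  qed
  obtain \<sigma> where \<sigma>: "(\<Sum>i<m. f \<sigma> i) \<ge> real m / 16"
  proof (rule ccontr)
    assume "\<not> thesis"
    have lt: "(\<Sum>i<m. f \<sigma> i) < real m / 16" for \<sigma>
      using that \<open>\<not> thesis\<close> by (meson not_le)
    have "(\<Sum>\<sigma>\<in>Pow {..<m}. \<Sum>i<m. f \<sigma> i) < (\<Sum>\<sigma>\<in>Pow {..<m}. real m / 16)"
      using lt by (intro sum_strict_mono) auto
    also have "\<dots> = real m * 2 ^ m / 16" by (simp add: card_Pow)
    finally show False using tot by simp
  qed
  define N where "N \<pi> = (\<Sum>i<m. indicator (E i (i \<in> \<sigma>)) \<pi> :: real)" for \<pi>
  have N0: "0 \<le> N \<pi>" and Nm: "N \<pi> \<le> real m" for \<pi>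
  proof -
    show "0 \<le> N \<pi>" unfolding N_def by (intro sum_nonneg) auto
    have "N \<pi> \<le> (\<Sum>i<m. 1)" unfolding N_def by (intro sum_mono) (auto simp: indicator_def)
    then show "N \<pi> \<le> real m" by simp
  qed
  have iN: "integrable (measure_pmf (Out \<sigma>)) N"
    by (rule integrable_pmf_bdd[where B="real m"]) (use N0 Nm in auto)
  have EN: "measure_pmf.expectation (Out \<sigma>) N = (\<Sum>i<m. f \<sigma> i)"
  proof -
    have "integrable (measure_pmf (Out \<sigma>)) (indicator (E i (i \<in> \<sigma>)) :: _ \<Rightarrow> real)" for i
      by (rule integrable_pmf_bdd[where B=1]) (auto simp: indicator_def)
    then show ?thesis unfolding N_def f_def by (subst Bochner_Integration.integral_sum) auto
  qed
  define G where "G = {\<pi>. N \<pi> \<ge> real m / 32}"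
  have pt: "N \<pi> \<le> real m * indicator G \<pi> + real m / 32" for \<pi>
    using Nm[of \<pi>] unfolding G_def by (auto simp: indicator_def)
  have "real m / 16 \<le> measure_pmf.expectation (Out \<sigma>) N" using \<sigma> EN by simp
  also have "\<dots> \<le> measure_pmf.expectation (Out \<sigma>) (\<lambda>\<pi>. real m * indicator G \<pi> + real m / 32)"
  proof (intro integral_mono iN pt)
    show "integrable (measure_pmf (Out \<sigma>)) (\<lambda>\<pi>. real m * indicator G \<pi> + real m / 32)"
      by (rule integrable_pmf_bdd[where B="real m + real m / 32"]) (auto simp: indicator_def)
  qed
  also have "\<dots> = real m * measure_pmf.prob (Out \<sigma>) G + real m / 32"
  proof -
    have "integrable (measure_pmf (Out \<sigma>)) (\<lambda>\<pi>. real m * indicator G \<pi> :: real)"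
      by (rule integrable_pmf_bdd[where B="real m"]) (auto simp: indicator_def)
    then show ?thesis by simp
  qed
  finally have "real m / 32 \<le> real m * measure_pmf.prob (Out \<sigma>) G" by simp
  then have pG: "1 / 32 \<le> measure_pmf.prob (Out \<sigma>) G" using m_ge(2) by (simp add: field_simps)
  have sub: "G \<subseteq> {\<pi>. opt_value S A H (MM \<sigma>) - pol_value (MM \<sigma>) H \<pi> \<ge> \<epsilon>}"
  proof
    fix \<pi> assume "\<pi> \<in> G"
    then have NG: "N \<pi> \<ge> real m / 32" unfolding G_def by simp
    have k0: "0 \<le> \<kappa>" unfolding \<kappa>_def using \<delta>_pos H2 by simp
    have "(\<Sum>i<m. Lb i (i \<in> \<sigma>) \<pi>) \<ge> (\<Sum>i<m. indicator (E i (i \<in> \<sigma>)) \<pi> * (\<kappa> / 2))"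
      by (intro sum_mono) (auto simp: indicator_def E_def Lb_nonneg)
    also have "(\<Sum>i<m. indicator (E i (i \<in> \<sigma>)) \<pi> * (\<kappa> / 2)) = N \<pi> * (\<kappa> / 2)"
      unfolding N_def by (simp add: sum_distrib_right)
    finally have "(\<Sum>i<m. Lb i (i \<in> \<sigma>) \<pi>) \<ge> N \<pi> * (\<kappa> / 2)" .
    moreover have "N \<pi> * (\<kappa> / 2) \<ge> real m / 32 * (\<kappa> / 2)" using NG k0 by (intro mult_right_mono) auto
    ultimately have "(\<Sum>i<m. Lb i (i \<in> \<sigma>) \<pi>) / real S \<ge> (real m / 32 * (\<kappa> / 2)) / real S"
      using S3 by (intro divide_right_mono) auto
    moreover have "(real m / 32 * (\<kappa> / 2)) / real S = real m * \<kappa> / (64 * real S)" by simp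
    ultimately have "(\<Sum>i<m. Lb i (i \<in> \<sigma>) \<pi>) / real S \<ge> \<epsilon>" using eps by linarith
    then show "\<pi> \<in> {\<pi>. opt_value S A H (MM \<sigma>) - pol_value (MM \<sigma>) H \<pi> \<ge> \<epsilon>}"
      using gap_Lb[of \<sigma> \<pi>] opt_ge[of \<sigma>] by simp
  qed
  have "measure_pmf.prob (Out \<sigma>) G \<le> measure_pmf.prob (Out \<sigma>) {\<pi>. opt_value S A H (MM \<sigma>) - pol_value (MM \<sigma>) H \<pi> \<ge> \<epsilon>}"
    using sub by (intro measure_pmf.finite_measure_mono) auto
  then show ?thesis using pG unfolding Out_def by (intro exI[of _ \<sigma>]) simp
qed

end

lemma main_bound:
  fixes H S A :: nat and \<epsilon> dm :: real and n :: nat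
  assumes H: "real H \<ge> 12288" and S: "real S \<ge> 12288" and A: "real A \<ge> 12288"
    and e0: "0 < \<epsilon>" and e1: "\<epsilon> < 1" and d0: "0 < dm" and d1: "dm \<le> 1 / (real S * real A)"
    and n: "real n \<le> 1 / 150994944 * (real H)\<^sup>2 / (dm * \<epsilon>\<^sup>2)"
  shows "(INF alg\<in>{alg. valid_alg S A H alg}.
         SUP (\<mu>, M)\<in>class_dm S A H dm. fail_prob S A H n \<epsilon> alg \<mu> M) \<ge> 1 / 32"
proof -
  define \<delta> where "\<delta> = 1536 * \<epsilon> / (real H)\<^sup>2"
  have Hpos: "real H > 0" using H by simp
  have "\<delta> \<le> 1 / (8 * real H)"
  proof -
    have "12288 * \<epsilon> \<le> real H" using H e1 by simp
    then have "1536 * \<epsilon> * (8 * real H) \<le> (real H)\<^sup>2" using Hpos by (simp add: power2_eq_square)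
    then show ?thesis unfolding \<delta>_def using Hpos by (simp add: field_simps)
  qed
  moreover have "0 < \<delta>" unfolding \<delta>_def using e0 Hpos by simp
  ultimately interpret I: inst S A H dm \<delta>
    using H S A d0 d1 by unfold_locales auto
  have n': "real n * (4 * real H * dm * I.hh) \<le> 1 / 2"
  proof -
    have hh: "I.hh = 8 * real H * \<delta>\<^sup>2" unfolding I.hh_def I.q0_def using Hpos by (simp add: field_simps)
    have "4 * real H * dm * I.hh = 32 * (real H)\<^sup>2 * dm * \<delta>\<^sup>2"
      unfolding hh by (simp add: power2_eq_square)
    also have "\<dots> = 32 * 1536\<^sup>2 * dm * \<epsilon>\<^sup>2 / (real H)\<^sup>2"
      unfolding \<delta>_def using Hpos by (simp add: field_simps power2_eq_square)
    finally have "4 * real H * dm * I.hh = 32 * 1536\<^sup>2 * dm * \<epsilon>\<^sup>2 / (real H)\<^sup>2" .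
    moreover have "real n * (32 * 1536\<^sup>2 * dm * \<epsilon>\<^sup>2 / (real H)\<^sup>2) \<le> 1 / 2"
    proof -
      have pos: "0 < dm * \<epsilon>\<^sup>2" using d0 e0 by simp
      have "real n * (dm * \<epsilon>\<^sup>2) \<le> 1 / 150994944 * (real H)\<^sup>2"
        using n pos by (simp add: field_simps)
      then have "real n * (dm * \<epsilon>\<^sup>2) * (32 * 1536\<^sup>2) \<le> 1 / 150994944 * (real H)\<^sup>2 * (32 * 1536\<^sup>2)"
        by (intro mult_right_mono) auto
      then show ?thesis using Hpos by (simp add: field_simps power2_eq_square)
    qed
    ultimately show ?thesis by simp
  qed
  have eps: "\<epsilon> \<le> real I.m * I.\<kappa> / (64 * real S)"
  proof -
    have k1: "I.\<kappa> = \<delta> * real H * (real H - 1) / 4" by (simp add: I.\<kappa>_def)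
    have k2: "\<delta> * real H * (real H - 1) / 4 = 384 * \<epsilon> * (real H - 1) / real H"
      unfolding \<delta>_def using Hpos by (simp add: field_simps power2_eq_square)
    have k: "I.\<kappa> = 384 * \<epsilon> * (real H - 1) / real H" using k1 k2 by simp
    have k0: "0 \<le> I.\<kappa>" unfolding k using H e0 by simp
    have "real S / 3 * I.\<kappa> / (64 * real S) \<le> real I.m * I.\<kappa> / (64 * real S)"
      using I.m_ge(1) k0 S by (intro divide_right_mono mult_right_mono) auto
    moreover have "real S / 3 * I.\<kappa> / (64 * real S) = 2 * \<epsilon> * (real H - 1) / real H"
    proof -
      have Sp: "real S > 0" using S by simp
      show ?thesis unfolding k using Sp Hpos by (simp add: field_simps)
    qed
    moreover have "\<epsilon> \<le> 2 * \<epsilon> * (real H - 1) / real H"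
      using H e0 Hpos by (simp add: field_simps)
    ultimately show ?thesis by linarith
  qed
  let ?F = "\<lambda>alg. SUP (\<mu>, M)\<in>class_dm S A H dm. fail_prob S A H n \<epsilon> alg \<mu> M"
  have ne: "{alg. valid_alg S A H alg} \<noteq> {}"
  proof -
    have "valid_alg S A H (\<lambda>D. return_pmf (\<lambda>t s. return_pmf 0))"
      unfolding valid_alg_def valid_policy_def using A by auto
    then show ?thesis by blast
  qed
  show ?thesis
  proof (rule cINF_greatest[OF ne])
    fix alg assume "alg \<in> {alg. valid_alg S A H alg}"
    obtain \<sigma> where \<sigma>: "measure_pmf.prob (bind_pmf (data_pmf n (I.MM \<sigma>) I.\<mu> H) alg)
            {\<pi>. opt_value S A H (I.MM \<sigma>) - pol_value (I.MM \<sigma>) H \<pi> \<ge> \<epsilon>} \<ge> 1 / 32"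
      using I.assouad[OF n' eps] by blast
    have mem: "(I.\<mu>, I.MM \<sigma>) \<in> class_dm S A H dm" by (rule I.class_MM)
    have bdd: "bdd_above ((\<lambda>(\<mu>, M). fail_prob S A H n \<epsilon> alg \<mu> M) ` class_dm S A H dm)"
      by (rule bdd_aboveI[where M=1]) (auto simp: fail_prob_def)
    have "1 / 32 \<le> fail_prob S A H n \<epsilon> alg I.\<mu> (I.MM \<sigma>)" using \<sigma> by (simp add: fail_prob_def)
    also have "\<dots> = (\<lambda>(\<mu>, M). fail_prob S A H n \<epsilon> alg \<mu> M) (I.\<mu>, I.MM \<sigma>)" by simp
    also have "\<dots> \<le> ?F alg" by (rule cSUP_upper[OF mem bdd])
    finally show "1 / 32 \<le> ?F alg" .
  qed
qed

theorem theorem4p2: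
  "\<exists>c1 c2 c p :: real. c1 > 0 \<and> c2 > 0 \<and> c > 0 \<and> p > 0 \<and>
    (\<forall>H S A :: nat. \<forall>\<epsilon> dm :: real. \<forall>n :: nat.
      real H \<ge> c1 \<longrightarrow> real S \<ge> c1 \<longrightarrow> real A \<ge> c1 \<longrightarrow>
      0 < \<epsilon> \<longrightarrow> \<epsilon> < c2 \<longrightarrow>
      0 < dm \<longrightarrow> dm \<le> 1 / (real S * real A) \<longrightarrow>
      real n \<le> c * (real H)\<^sup>2 / (dm * \<epsilon>\<^sup>2) \<longrightarrow>
      (INF alg\<in>{alg. valid_alg S A H alg}.
         SUP (\<mu>, M)\<in>class_dm S A H dm. fail_prob S A H n \<epsilon> alg \<mu> M) \<ge> p)"
  apply (rule exI[of _ 12288], rule exI[of _ 1], rule exI[of _ "1 / 150994944"], rule exI[of _ "1 / 32"])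
  using main_bound by auto

end
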